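(* Let $\mathcal H$ be an infinite-dimensional complex Hilbert space and let $\mathcal R_f(\mathcal H)$ be the set of regular forms in $\mathcal V_f(\mathcal H)$. Then $(\mathcal R_f(\mathcal H);\oplus_{|\mathcal R_f(\mathcal H)},o)$ is a generalized effect algebra, but $\mathcal R_f(\mathcal H)$ is not a sub-generalized effect algebra of $(\mathcal V_f(\mathcal H);\oplus,o)$.
   Context: Bilinear forms $t$ on $\mathcal H$ are sesquilinear maps $D(t)\times D(t)\to\mathbb C$ on a dense linear subspace $D(t)$ (linear in the first argument); $t$ is positive if $t(x,x)\ge0$ on $D(t)$, bounded if $\sup\{t(x,x)\mid x\in D(t),\|x\|=1\}<\infty$. The sum $t+s$ has domain $D(t)\cap D(s)$. $o$ is the zero form on $\mathcal H$. $\mathcal V_f(\mathcal H)$ is the set of positive bilinear forms with dense domain such that $D(t)=\mathcal H$ whenever $t$ is bounded; $t\oplus s$ is defined iff $t$ or $s$ is bounded or $D(t)=D(s)$, and then $t\oplus s=t+s$; $(\mathcal V_f(\mathcal H);\oplus,o)$ is a generalized effect algebra. A positive form $t$ is closed if $D(t)$ is a Hilbert space under $(x,y)_t=t(x,y)+(1+m_t)(x,y)$, where $m_t=\inf\{t(x,x)\mid x\in D(t),\|x\|=1\}$; it is closable if it has a closed extension. For a positive form $t$, its regular part $t_r$ is the largest closable positive form with domain $D(t)$ satisfying $t_r(x,x)\le t(x,x)$ for all $x\in D(t)$ (it exists), and its singular part is $t_s=t-t_r$ (a positive form with domain $D(t)$). $t$ is regular if $t_s=0$ and singular if $t_r=0$.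 A generalized effect algebra is a structure $(E;\oplus,0)$ with a partial operation that is commutative and associative (when one side is defined), has $x\oplus0=x$, is cancellative, and satisfies $x\oplus y=0\Rightarrow x=y=0$. A subset $Q\subseteq E$ is a sub-generalized effect algebra if $0\in Q$ and whenever $x\oplus y=z$ in $E$ with two of $x,y,z$ in $Q$, all three are in $Q$. For $Q\subseteq E$, $x\oplus_{|Q}y$ is defined iff $x\oplus y$ is defined in $E$ and lies in $Q$, and then equals $x\oplus y$. *)

theory Defs
  imports "HOL-Analysis.Analysis"
begin

class chilbert = banach +
  fixes hscale :: "complex \<Rightarrow> 'a \<Rightarrow> 'a"
    and hinner :: "'a \<Rightarrow> 'a \<Rightarrow> complex"
  assumes hscale_add_right: "hscale a (x + y) = hscale a x + hscale a y"
    and hscale_add_left: "hscale (a + b) x = hscale a x + hscale b x"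
    and hscale_hscale: "hscale a (hscale b x) = hscale (a * b) x"
    and hscale_one: "hscale 1 x = x"
    and scaleR_hscale: "scaleR r x = hscale (complex_of_real r) x"
    and hinner_add_left: "hinner (x + y) z = hinner x z + hinner y z"
    and hinner_hscale_left: "hinner (hscale a x) y = a * hinner x y"
    and hinner_commute: "hinner y x = cnj (hinner x y)"
    and norm_eq_sqrt_hinner: "norm x = sqrt (Re (hinner x x))"

definition infinite_dimensional :: "'h::chilbert itself \<Rightarrow> bool" where
  "infinite_dimensional _ \<longleftrightarrow>
     \<not> (\<exists>S :: 'h set. finite S \<and> (\<forall>x. \<exists>c. x = (\<Sum>s\<in>S. hscale (c s) s)))"

definition csubspace :: "'h::chilbert set \<Rightarrow> bool" where
  "csubspace D \<longleftrightarrow> 0 \<in> D \<and> (\<forall>x\<in>D. \<forall>y\<in>D. x + y \<in> D)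
      \<and> (\<forall>a. \<forall>x\<in>D. hscale a x \<in> D)"

text \<open>A form is represented by its domain together with its values; by
convention the value function is \<open>0\<close> outside \<open>D \<times> D\<close>, so that two forms
are equal iff they have the same domain and agree on it.\<close>

type_synonym 'h form = "'h set \<times> ('h \<Rightarrow> 'h \<Rightarrow> complex)"

definition dom_f :: "'h form \<Rightarrow> 'h set" where "dom_f t = fst t"
definition val_f :: "'h form \<Rightarrow> 'h \<Rightarrow> 'h \<Rightarrow> complex" where "val_f t = snd t"

definition is_form :: "'h::chilbert form \<Rightarrow> bool" where
  "is_form t \<longleftrightarrow> csubspace (dom_f t) \<and> closure (dom_f t) = UNIV
     \<and> (\<forall>x y. \<not> (x \<in> dom_f t \<and> y \<in> dom_f t) \<longrightarrow> val_f t x y = 0)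
     \<and> (\<forall>x\<in>dom_f t. \<forall>x'\<in>dom_f t. \<forall>y\<in>dom_f t.
          val_f t (x + x') y = val_f t x y + val_f t x' y
        \<and> val_f t y (x + x') = val_f t y x + val_f t y x')
     \<and> (\<forall>a. \<forall>x\<in>dom_f t. \<forall>y\<in>dom_f t.
          val_f t (hscale a x) y = a * val_f t x y
        \<and> val_f t y (hscale a x) = cnj a * val_f t y x)"

definition positive_f :: "'h::chilbert form \<Rightarrow> bool" where
  "positive_f t \<longleftrightarrow> is_form t \<and>
     (\<forall>x\<in>dom_f t. Im (val_f t x x) = 0 \<and> 0 \<le> Re (val_f t x x))"

definition bounded_f :: "'h::chilbert form \<Rightarrow> bool" where
  "bounded_f t \<longleftrightarrow> bdd_above {Re (val_f t x x) | x. x \<in> dom_f t \<and> norm x = 1}"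

definition zero_f :: "'h form" where
  "zero_f = (UNIV, \<lambda>x y. 0)"

definition add_f :: "'h form \<Rightarrow> 'h form \<Rightarrow> 'h form" where
  "add_f t s = (dom_f t \<inter> dom_f s,
     \<lambda>x y. if x \<in> dom_f t \<inter> dom_f s \<and> y \<in> dom_f t \<inter> dom_f s
           then val_f t x y + val_f s x y else 0)"

definition diff_f :: "'h form \<Rightarrow> 'h form \<Rightarrow> 'h form" where
  "diff_f t s = (dom_f t \<inter> dom_f s,
     \<lambda>x y. if x \<in> dom_f t \<inter> dom_f s \<and> y \<in> dom_f t \<inter> dom_f s
           then val_f t x y - val_f s x y else 0)"

definition Vf :: "'h::chilbert form set" where
  "Vf = {t. positive_f t \<and> (bounded_f t \<longrightarrow> dom_f t = UNIV)}"

definition oplus_Vf :: "'h::chilbert form \<Rightarrow> 'h form \<Rightarrow> 'h form option" where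
  "oplus_Vf t s = (if bounded_f t \<or> bounded_f s \<or> dom_f t = dom_f s
                   then Some (add_f t s) else None)"

definition m_f :: "'h::chilbert form \<Rightarrow> real" where
  "m_f t = Inf {Re (val_f t x x) | x. x \<in> dom_f t \<and> norm x = 1}"

text \<open>The norm induced by \<open>(x,y)_t = t(x,y) + (1 + m_t)(x,y)\<close>.\<close>

definition tnorm :: "'h::chilbert form \<Rightarrow> 'h \<Rightarrow> real" where
  "tnorm t x = sqrt (Re (val_f t x x) + (1 + m_f t) * (norm x)\<^sup>2)"

definition closed_f :: "'h::chilbert form \<Rightarrow> bool" where
  "closed_f t \<longleftrightarrow> positive_f t \<and>
     (\<forall>X :: nat \<Rightarrow> 'h. (\<forall>n. X n \<in> dom_f t) \<and>
        (\<forall>e>0. \<exists>N. \<forall>m\<ge>N. \<forall>n\<ge>N. tnorm t (X m - X n) < e)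
        \<longrightarrow> (\<exists>x\<in>dom_f t. (\<lambda>n. tnorm t (X n - x)) \<longlonglongrightarrow> 0))"

definition extends_f :: "'h form \<Rightarrow> 'h form \<Rightarrow> bool" where
  "extends_f s t \<longleftrightarrow> dom_f t \<subseteq> dom_f s \<and>
     (\<forall>x\<in>dom_f t. \<forall>y\<in>dom_f t. val_f s x y = val_f t x y)"

definition closable_f :: "'h::chilbert form \<Rightarrow> bool" where
  "closable_f t \<longleftrightarrow> (\<exists>s. closed_f s \<and> extends_f s t)"

definition regular_part_cand :: "'h::chilbert form \<Rightarrow> 'h form \<Rightarrow> bool" where
  "regular_part_cand t r \<longleftrightarrow> positive_f r \<and> closable_f r \<and> dom_f r = dom_f t \<and>
     (\<forall>x\<in>dom_f t. Re (val_f r x x) \<le> Re (val_f t x x))"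

definition regular_part :: "'h::chilbert form \<Rightarrow> 'h form" where
  "regular_part t = (THE r. regular_part_cand t r \<and>
     (\<forall>r'. regular_part_cand t r' \<longrightarrow>
        (\<forall>x\<in>dom_f t. Re (val_f r' x x) \<le> Re (val_f r x x))))"

definition singular_part :: "'h::chilbert form \<Rightarrow> 'h form" where
  "singular_part t = diff_f t (regular_part t)"

definition regular_f :: "'h::chilbert form \<Rightarrow> bool" where
  "regular_f t \<longleftrightarrow> (\<forall>x\<in>dom_f t. \<forall>y\<in>dom_f t. val_f (singular_part t) x y = 0)"

definition Rf :: "'h::chilbert form set" where
  "Rf = {t \<in> Vf. regular_f t}"

definition gen_effect_algebra :: "'a set \<Rightarrow> ('a \<Rightarrow> 'a \<Rightarrow> 'a option) \<Rightarrow> 'a \<Rightarrow> bool" where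
  "gen_effect_algebra E op z \<longleftrightarrow> z \<in> E
     \<and> (\<forall>x\<in>E. \<forall>y\<in>E. \<forall>w. op x y = Some w \<longrightarrow> w \<in> E)
     \<and> (\<forall>x\<in>E. \<forall>y\<in>E. op x y = op y x)
     \<and> (\<forall>x\<in>E. \<forall>y\<in>E. \<forall>w\<in>E.
          Option.bind (op x y) (\<lambda>u. op u w) = Option.bind (op y w) (\<lambda>v. op x v))
     \<and> (\<forall>x\<in>E. op x z = Some x)
     \<and> (\<forall>x\<in>E. \<forall>y\<in>E. \<forall>y'\<in>E. \<forall>w. op x y = Some w \<and> op x y' = Some w \<longrightarrow> y = y')
     \<and> (\<forall>x\<in>E. \<forall>y\<in>E. op x y = Some z \<longrightarrow> x = z \<and> y = z)"

definition sub_gea :: "'a set \<Rightarrow> ('a \<Rightarrow> 'a \<Rightarrow> 'a option) \<Rightarrow> 'a \<Rightarrow> 'a set \<Rightarrow> bool" where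
  "sub_gea E op z Q \<longleftrightarrow> Q \<subseteq> E \<and> z \<in> Q \<and>
     (\<forall>x\<in>E. \<forall>y\<in>E. \<forall>w\<in>E. op x y = Some w \<longrightarrow>
        ((x \<in> Q \<and> y \<in> Q) \<or> (x \<in> Q \<and> w \<in> Q) \<or> (y \<in> Q \<and> w \<in> Q))
        \<longrightarrow> x \<in> Q \<and> y \<in> Q \<and> w \<in> Q)"

definition restrict_op :: "'a set \<Rightarrow> ('a \<Rightarrow> 'a \<Rightarrow> 'a option) \<Rightarrow> 'a \<Rightarrow> 'a \<Rightarrow> 'a option" where
  "restrict_op Q op x y = (case op x y of Some w \<Rightarrow> if w \<in> Q then Some w else None | None \<Rightarrow> None)"

end

theory Submission
  imports Defs
begin


lemma hinner_zero_left[simp]: "hinner 0 y = 0"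
  using hinner_add_left[of 0 0 y] by simp

lemma hinner_conj: "cnj (hinner x y) = hinner y x"
  by (simp add: hinner_commute[of y x])

lemma hinner_zero_right[simp]: "hinner x 0 = 0"
  by (metis hinner_commute hinner_zero_left complex_cnj_zero)

lemma hinner_add_right: "hinner x (y + z) = hinner x y + hinner x z"
  by (metis hinner_commute hinner_add_left complex_cnj_add)

lemma hinner_hscale_right: "hinner x (hscale a y) = cnj a * hinner x y"
  by (metis hinner_commute hinner_hscale_left complex_cnj_mult)

lemma hinner_minus_left: "hinner (- x) y = - hinner x y"
  using hinner_add_left[of x "-x" y] by (simp add: minus_unique)

lemma hinner_minus_right: "hinner x (- y) = - hinner x y"
  by (metis hinner_commute hinner_minus_left complex_cnj_minus)

lemma hinner_diff_left: "hinner (x - z) y = hinner x y - hinner z y"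
  using hinner_add_left[of x "-z" y] by (simp add: hinner_minus_left)

lemma hinner_diff_right: "hinner x (y - z) = hinner x y - hinner x z"
  using hinner_add_right[of x y "-z"] by (simp add: hinner_minus_right)

lemma hscale_zero_right[simp]: "hscale a 0 = 0"
  using hscale_add_right[of a 0 0] by simp

lemma hscale_zero_left[simp]: "hscale 0 x = 0"
  using hscale_add_left[of 0 0 x] by simp

lemma hscale_minus_right: "hscale a (- x) = - hscale a x"
  using hscale_add_right[of a x "-x"] by (simp add: minus_unique)

lemma hscale_minus_left: "hscale (- a) x = - hscale a x"
  using hscale_add_left[of a "-a" x] by (simp add: minus_unique)

lemma hscale_diff_right: "hscale a (x - y) = hscale a x - hscale a y"
  using hscale_add_right[of a x "-y"] by (simp add: hscale_minus_right)

lemma hscale_diff_left: "hscale (a - b) x = hscale a x - hscale b x"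
  using hscale_add_left[of a "-b" x] by (simp add: hscale_minus_left)

lemma hscale_of_real: "hscale (complex_of_real r) x = scaleR r x"
  by (simp add: scaleR_hscale)

lemma hscale_minus_one: "hscale (-1) x = - x"
  by (simp add: hscale_minus_left hscale_one)

lemma hscale_sum_right: "hscale a (sum f S) = (\<Sum>i\<in>S. hscale a (f i))"
  by (induction S rule: infinite_finite_induct) (auto simp: hscale_add_right)

lemma hinner_sum_left: "hinner (sum f S) y = (\<Sum>i\<in>S. hinner (f i) y)"
  by (induction S rule: infinite_finite_induct) (auto simp: hinner_add_left)

lemma hinner_sum_right: "hinner y (sum f S) = (\<Sum>i\<in>S. hinner y (f i))"
  by (induction S rule: infinite_finite_induct) (auto simp: hinner_add_right)

lemma hinner_self_Im: "Im (hinner x x) = 0"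
  using hinner_commute[of x x] by (metis cnj.simps(2) complex_cnj_cnj equal_neg_zero)

lemma hinner_self_Re: "Re (hinner x x) = (norm x)^2"
proof -
  have "Re (hinner x x) \<ge> 0" using norm_eq_sqrt_hinner[of x]
    by (metis norm_ge_zero real_sqrt_ge_0_iff)
  then show ?thesis using norm_eq_sqrt_hinner[of x] by simp
qed

lemma hinner_self: "hinner x x = complex_of_real ((norm x)^2)"
  by (metis complex_eq_iff hinner_self_Im hinner_self_Re Re_complex_of_real Im_complex_of_real)

lemma norm_hscale: "norm (hscale a x) = cmod a * norm x"
proof -
  have "(norm (hscale a x))^2 = Re (hinner (hscale a x) (hscale a x))"
    by (simp add: hinner_self_Re)
  also have "\<dots> = Re (a * cnj a * hinner x x)"
    by (simp only: hinner_hscale_left hinner_hscale_right mult.assoc mult.left_commute)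
  also have "\<dots> = (cmod a * norm x)^2"
    by (simp only: hinner_self flip: complex_norm_square of_real_mult)
       (simp add: power_mult_distrib)
  finally show ?thesis
    by (simp add: power2_eq_iff_nonneg)
qed

lemma generic_CS:
  fixes hxy hyx bxx byy :: complex and P :: "complex \<Rightarrow> complex"
  assumes exp: "\<And>a. P a = bxx - cnj a * hxy - a * hyx + a * cnj a * byy"
    and herm: "hyx = cnj hxy"
    and pos: "\<And>a. 0 \<le> Re (P a)"
    and rx: "Im bxx = 0" and ry: "Im byy = 0" and py: "0 \<le> Re byy"
  shows "(cmod hxy)^2 \<le> Re bxx * Re byy"
proof (cases "hxy = 0")
  case True
  have "0 \<le> Re (P 0)" by (rule pos)
  then have "0 \<le> Re bxx" by (simp add: exp)
  then show ?thesis using True py by simp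
next
  case False
  have key: "0 \<le> Re bxx - 2 * t * (cmod hxy)^2 + t^2 * (cmod hxy)^2 * Re byy" for t :: real
  proof -
    have "P (complex_of_real t * hxy) = bxx - complex_of_real (2 * t * (cmod hxy)^2)
          + complex_of_real (t^2 * (cmod hxy)^2) * byy"
    proof -
      have hh: "hxy * cnj hxy = complex_of_real ((cmod hxy)^2)" "cnj hxy * hxy = complex_of_real ((cmod hxy)^2)"
        by (metis complex_norm_square, metis complex_norm_square mult.commute)
      have "P (complex_of_real t * hxy) = bxx - complex_of_real t * (cnj hxy * hxy)
          - complex_of_real t * (hxy * cnj hxy) + complex_of_real t * complex_of_real t * (hxy * cnj hxy) * byy"
        by (simp add: exp herm algebra_simps)
      then show ?thesis unfolding hh by (simp add: algebra_simps power2_eq_square)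
    qed
    moreover have "Re (complex_of_real (t^2 * (cmod hxy)^2) * byy) = t^2 * (cmod hxy)^2 * Re byy"
      by simp
    ultimately show ?thesis using pos[of "complex_of_real t * hxy"] by simp
  qed
  have hpos: "(cmod hxy)^2 > 0" using False by simp
  show ?thesis
  proof (cases "Re byy = 0")
    case True
    have "0 \<le> Re bxx - 2 * ((Re bxx + 1) / (2 * (cmod hxy)^2)) * (cmod hxy)^2"
      using key[of "(Re bxx + 1) / (2 * (cmod hxy)^2)"] True by simp
    also have "\<dots> = -1" using hpos by (simp add: field_simps)
    finally show ?thesis by simp
  next
    case False
    then have yb: "Re byy > 0" using py by simp
    have "0 \<le> Re bxx - 2 * (1 / Re byy) * (cmod hxy)^2 + (1/Re byy)^2 * (cmod hxy)^2 * Re byy"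
      by (rule key)
    also have "\<dots> = Re bxx - (cmod hxy)^2 / Re byy" using yb by (simp add: field_simps power2_eq_square)
    finally have "(cmod hxy)^2 / Re byy \<le> Re bxx" by simp
    then show ?thesis using yb by (simp add: field_simps)
  qed
qed

lemma hinner_CS: "cmod (hinner x y) \<le> norm x * norm y"
proof -
  have "(cmod (hinner x y))^2 \<le> Re (hinner x x) * Re (hinner y y)"
  proof (rule generic_CS[where P = "\<lambda>a. hinner (x - hscale a y) (x - hscale a y)"
        and hyx = "hinner y x"])
    fix a
    show "hinner (x - hscale a y) (x - hscale a y) =
      hinner x x - cnj a * hinner x y - a * hinner y x + a * cnj a * hinner y y"
      by (simp add: hinner_diff_left hinner_diff_right hinner_hscale_left hinner_hscale_right
          algebra_simps)
    show "0 \<le> Re (hinner (x - hscale a y) (x - hscale a y))" by (simp add: hinner_self_Re)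
  qed (auto simp: hinner_commute[of y x] hinner_self_Im hinner_self_Re)
  then have "(cmod (hinner x y))^2 \<le> (norm x * norm y)^2"
    by (simp add: hinner_self_Re power_mult_distrib)
  then show ?thesis by (simp add: power2_le_iff_abs_le)
qed

lemma norm_hinner_diff: "cmod (hinner x y - hinner x' y) \<le> norm (x - x') * norm y"
  using hinner_CS[of "x - x'" y] by (simp add: hinner_diff_left)

lemma bounded_linear_hinner_left: "bounded_linear (\<lambda>x. hinner x y)"
proof
  show "hinner (x + z) y = hinner x y + hinner z y" for x z by (rule hinner_add_left)
  show "hinner (scaleR r x) y = scaleR r (hinner x y)" for r x
    by (simp add: scaleR_hscale hinner_hscale_left scaleR_conv_of_real)
  show "\<exists>K. \<forall>x. norm (hinner x y) \<le> norm x * K"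
    using hinner_CS by (intro exI[of _ "norm y"]) auto
qed

lemma tendsto_hinner_left: "(f \<longlongrightarrow> l) F \<Longrightarrow> ((\<lambda>n. hinner (f n) y) \<longlongrightarrow> hinner l y) F"
  using bounded_linear.tendsto[OF bounded_linear_hinner_left] .

lemma continuous_hinner_left: "continuous_on UNIV (\<lambda>x. hinner x y)"
  using bounded_linear.continuous_on[OF bounded_linear_hinner_left] continuous_on_id by blast

lemma hscale_norm_eq: "hscale a x = hscale b x \<Longrightarrow> x \<noteq> 0 \<Longrightarrow> a = b"
proof -
  assume "hscale a x = hscale b x" "x \<noteq> 0"
  then have "hscale (a - b) x = 0" by (simp add: hscale_diff_left)
  then have "cmod (a - b) * norm x = 0" by (metis norm_hscale norm_zero)
  with \<open>x \<noteq> 0\<close> show "a = b" by simp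
qed


definition qf :: "'h::chilbert form \<Rightarrow> 'h \<Rightarrow> real" where
  "qf t x = Re (val_f t x x)"

lemma form_pair: "t = (dom_f t, val_f t)"
  by (simp add: dom_f_def val_f_def)

lemma dom_f_pair[simp]: "dom_f (D, v) = D" and val_f_pair[simp]: "val_f (D, v) = v"
  by (simp_all add: dom_f_def val_f_def)

lemma csubspace_0: "csubspace D \<Longrightarrow> 0 \<in> D"
  and csubspace_add: "csubspace D \<Longrightarrow> x \<in> D \<Longrightarrow> y \<in> D \<Longrightarrow> x + y \<in> D"
  and csubspace_hscale: "csubspace D \<Longrightarrow> x \<in> D \<Longrightarrow> hscale a x \<in> D"
  by (auto simp: csubspace_def)

lemma csubspace_minus: "csubspace D \<Longrightarrow> x \<in> D \<Longrightarrow> - x \<in> D"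
  using csubspace_hscale[of D x "-1"] by (simp add: hscale_minus_one)

lemma csubspace_diff: "csubspace D \<Longrightarrow> x \<in> D \<Longrightarrow> y \<in> D \<Longrightarrow> x - y \<in> D"
  by (metis csubspace_add csubspace_minus diff_conv_add_uminus)

lemma csubspace_scaleR: "csubspace D \<Longrightarrow> x \<in> D \<Longrightarrow> scaleR r x \<in> D"
  using csubspace_hscale[of D x "complex_of_real r"] by (simp add: hscale_of_real)

lemma csubspace_sum: "csubspace D \<Longrightarrow> (\<And>i. i \<in> S \<Longrightarrow> f i \<in> D) \<Longrightarrow> sum f S \<in> D"
  by (induction S rule: infinite_finite_induct) (auto intro: csubspace_0 csubspace_add)

lemma csubspace_Int: "csubspace A \<Longrightarrow> csubspace B \<Longrightarrow> csubspace (A \<inter> B)"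
  by (auto simp: csubspace_def)

lemma csubspace_UNIV: "csubspace UNIV"
  by (auto simp: csubspace_def)

lemma is_formD:
  assumes "is_form t"
  shows "csubspace (dom_f t)" "closure (dom_f t) = UNIV"
    "\<And>x y. \<not> (x \<in> dom_f t \<and> y \<in> dom_f t) \<Longrightarrow> val_f t x y = 0"
    "\<And>x x' y. x \<in> dom_f t \<Longrightarrow> x' \<in> dom_f t \<Longrightarrow> y \<in> dom_f t \<Longrightarrow>
        val_f t (x + x') y = val_f t x y + val_f t x' y"
    "\<And>x x' y. x \<in> dom_f t \<Longrightarrow> x' \<in> dom_f t \<Longrightarrow> y \<in> dom_f t \<Longrightarrow>
        val_f t y (x + x') = val_f t y x + val_f t y x'"
    "\<And>a x y. x \<in> dom_f t \<Longrightarrow> y \<in> dom_f t \<Longrightarrow> val_f t (hscale a x) y = a * val_f t x y"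
    "\<And>a x y. x \<in> dom_f t \<Longrightarrow> y \<in> dom_f t \<Longrightarrow> val_f t y (hscale a x) = cnj a * val_f t y x"
  using assms unfolding is_form_def by blast+

lemma form_ext:
  assumes "is_form t" "is_form s" "dom_f t = dom_f s"
    and "\<And>x y. x \<in> dom_f t \<Longrightarrow> y \<in> dom_f t \<Longrightarrow> val_f t x y = val_f s x y"
  shows "t = s"
proof -
  have "val_f t = val_f s"
  proof (intro ext)
    fix x y show "val_f t x y = val_f s x y"
    proof (cases "x \<in> dom_f t \<and> y \<in> dom_f t")
      case True then show ?thesis using assms(4) by blast
    next
      case False then show ?thesis
        using is_formD(3)[OF assms(1), of x y] is_formD(3)[OF assms(2), of x y] assms(3) by simp
    qed
  qed
  then show ?thesis using assms(3) form_pair[of t] form_pair[of s] by metis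
qed

context
  fixes t :: "'h::chilbert form"
  assumes F: "is_form t"
begin

lemma fdom_0: "0 \<in> dom_f t" and fdom_add: "x \<in> dom_f t \<Longrightarrow> y \<in> dom_f t \<Longrightarrow> x + y \<in> dom_f t"
  and fdom_hscale: "x \<in> dom_f t \<Longrightarrow> hscale a x \<in> dom_f t"
  and fdom_minus: "x \<in> dom_f t \<Longrightarrow> - x \<in> dom_f t"
  and fdom_diff: "x \<in> dom_f t \<Longrightarrow> y \<in> dom_f t \<Longrightarrow> x - y \<in> dom_f t"
  and fdom_scaleR: "x \<in> dom_f t \<Longrightarrow> scaleR r x \<in> dom_f t"
  by (rule csubspace_0[OF is_formD(1)[OF F]] csubspace_add[OF is_formD(1)[OF F]]
      csubspace_hscale[OF is_formD(1)[OF F]] csubspace_minus[OF is_formD(1)[OF F]]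
      csubspace_diff[OF is_formD(1)[OF F]] csubspace_scaleR[OF is_formD(1)[OF F]]; assumption)+

lemma fval_add_left: "x \<in> dom_f t \<Longrightarrow> x' \<in> dom_f t \<Longrightarrow> y \<in> dom_f t \<Longrightarrow>
        val_f t (x + x') y = val_f t x y + val_f t x' y"
  and fval_add_right: "x \<in> dom_f t \<Longrightarrow> x' \<in> dom_f t \<Longrightarrow> y \<in> dom_f t \<Longrightarrow>
        val_f t y (x + x') = val_f t y x + val_f t y x'"
  and fval_hscale_left: "x \<in> dom_f t \<Longrightarrow> y \<in> dom_f t \<Longrightarrow> val_f t (hscale a x) y = a * val_f t x y"
  and fval_hscale_right: "x \<in> dom_f t \<Longrightarrow> y \<in> dom_f t \<Longrightarrow> val_f t y (hscale a x) = cnj a * val_f t y x"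
  and fval_out: "\<not> (x \<in> dom_f t \<and> y \<in> dom_f t) \<Longrightarrow> val_f t x y = 0"
  by (rule is_formD[OF F]; assumption)+

lemma fval_minus_left: "x \<in> dom_f t \<Longrightarrow> y \<in> dom_f t \<Longrightarrow> val_f t (- x) y = - val_f t x y"
  using fval_hscale_left[of x y "-1"] by (simp add: hscale_minus_one)

lemma fval_minus_right: "x \<in> dom_f t \<Longrightarrow> y \<in> dom_f t \<Longrightarrow> val_f t y (- x) = - val_f t y x"
  using fval_hscale_right[of x y "-1"] by (simp add: hscale_minus_one)

lemma fval_diff_left: "x \<in> dom_f t \<Longrightarrow> x' \<in> dom_f t \<Longrightarrow> y \<in> dom_f t \<Longrightarrow>
        val_f t (x - x') y = val_f t x y - val_f t x' y"
  using fval_add_left[of x "-x'" y] fval_minus_left fdom_minus by simp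

lemma fval_diff_right: "x \<in> dom_f t \<Longrightarrow> x' \<in> dom_f t \<Longrightarrow> y \<in> dom_f t \<Longrightarrow>
        val_f t y (x - x') = val_f t y x - val_f t y x'"
  using fval_add_right[of x "-x'" y] fval_minus_right fdom_minus by simp

lemma fval_zero_left[simp]: "val_f t 0 y = 0"
proof (cases "y \<in> dom_f t")
  case True
  have "val_f t (0 + 0) y = val_f t 0 y + val_f t 0 y" by (rule fval_add_left[OF fdom_0 fdom_0 True])
  then show ?thesis by simp
qed (simp add: fval_out)

lemma fval_zero_right[simp]: "val_f t y 0 = 0"
proof (cases "y \<in> dom_f t")
  case True
  have "val_f t y (0 + 0) = val_f t y 0 + val_f t y 0" by (rule fval_add_right[OF fdom_0 fdom_0 True])
  then show ?thesis by simp
qed (simp add: fval_out)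

lemma fval_scaleR_left: "x \<in> dom_f t \<Longrightarrow> y \<in> dom_f t \<Longrightarrow> val_f t (scaleR r x) y = of_real r * val_f t x y"
  using fval_hscale_left[of x y "complex_of_real r"] by (simp add: hscale_of_real)

lemma fval_scaleR_right: "x \<in> dom_f t \<Longrightarrow> y \<in> dom_f t \<Longrightarrow> val_f t y (scaleR r x) = of_real r * val_f t y x"
  using fval_hscale_right[of x y "complex_of_real r"] by (simp add: hscale_of_real)

lemma fval_expand: "x \<in> dom_f t \<Longrightarrow> y \<in> dom_f t \<Longrightarrow>
   val_f t (x + y) (x + y) = val_f t x x + val_f t x y + val_f t y x + val_f t y y"
  by (simp add: fval_add_left fval_add_right fdom_add)

lemma fval_expand_diff: "x \<in> dom_f t \<Longrightarrow> y \<in> dom_f t \<Longrightarrow>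
   val_f t (x - y) (x - y) = val_f t x x - val_f t x y - val_f t y x + val_f t y y"
  by (simp add: fval_diff_left fval_diff_right fdom_diff)

end

lemma form_eq_diag:
  assumes "is_form t" "is_form s" "dom_f t = dom_f s"
    and diag: "\<And>x. x \<in> dom_f t \<Longrightarrow> val_f t x x = val_f s x x"
  shows "t = s"
proof (rule form_ext[OF assms(1-3)])
  fix x y assume x: "x \<in> dom_f t" and y: "y \<in> dom_f t"
  define d where "d = (\<lambda>u v. val_f t u v - val_f s u v)"
  have ys: "y \<in> dom_f s" "x \<in> dom_f s" using x y assms(3) by auto
  have dzero: "d u u = 0" if "u \<in> dom_f t" for u using diag[OF that] by (simp add: d_def)
  have iy: "hscale \<i> y \<in> dom_f t" using fdom_hscale[OF assms(1) y] .
  have e1: "d (x + y) (x + y) = d x x + d x y + d y x + d y y"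
    unfolding d_def using fval_expand[OF assms(1) x y] fval_expand[OF assms(2) ys(2) ys(1)] by simp
  have iys: "hscale \<i> y \<in> dom_f s" using fdom_hscale[OF assms(2) ys(1)] .
  have et: "val_f t (x + hscale \<i> y) (x + hscale \<i> y) = val_f t x x - \<i> * val_f t x y
       + \<i> * val_f t y x + val_f t (hscale \<i> y) (hscale \<i> y)"
    using fval_expand[OF assms(1) x iy] fval_hscale_left[OF assms(1) y x] fval_hscale_right[OF assms(1) y x]
    by simp
  have es: "val_f s (x + hscale \<i> y) (x + hscale \<i> y) = val_f s x x - \<i> * val_f s x y
       + \<i> * val_f s y x + val_f s (hscale \<i> y) (hscale \<i> y)"
    using fval_expand[OF assms(2) ys(2) iys] fval_hscale_left[OF assms(2) ys(1) ys(2)]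
      fval_hscale_right[OF assms(2) ys(1) ys(2)]
    by simp
  have e2: "d (x + hscale \<i> y) (x + hscale \<i> y) = d x x + (- \<i>) * d x y + \<i> * d y x + d (hscale \<i> y) (hscale \<i> y)"
    unfolding d_def et es by (simp add: algebra_simps)
  have "d x y + d y x = 0" using e1 dzero x y fdom_add[OF assms(1) x y] by simp
  moreover have "(- \<i>) * d x y + \<i> * d y x = 0"
    using e2 dzero x iy fdom_add[OF assms(1) x iy] by simp
  ultimately have "\<i> * (d y x - d x y) = 0" "d y x = - d x y"
    by (simp_all add: algebra_simps add_eq_0_iff2)
  then have "d x y = 0" by simp
  then show "val_f t x y = val_f s x y" by (simp add: d_def)
qed

context
  fixes t :: "'h::chilbert form"
  assumes P: "positive_f t"
begin

lemma pos_form: "is_form t" using P by (simp add: positive_f_def)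

lemma pos_diag: "x \<in> dom_f t \<Longrightarrow> val_f t x x = complex_of_real (qf t x)"
  using P by (simp add: positive_f_def qf_def complex_eq_iff)

lemma qf_out: "x \<notin> dom_f t \<Longrightarrow> qf t x = 0"
  by (simp add: qf_def fval_out[OF pos_form])

lemma qf_nonneg: "0 \<le> qf t x"
proof (cases "x \<in> dom_f t")
  case True then show ?thesis using P by (simp add: positive_f_def qf_def)
qed (simp add: qf_out)

lemma pos_herm:
  assumes x: "x \<in> dom_f t" and y: "y \<in> dom_f t"
  shows "val_f t y x = cnj (val_f t x y)"
proof -
  have F: "is_form t" by (rule pos_form)
  have iy: "hscale \<i> y \<in> dom_f t" by (rule fdom_hscale[OF F y])
  have "Im (val_f t (x + y) (x + y)) = 0" using pos_diag[OF fdom_add[OF F x y]] by simp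
  then have a: "Im (val_f t x y + val_f t y x) = 0"
    using fval_expand[OF F x y] pos_diag[OF x] pos_diag[OF y] by simp
  have "Im (val_f t (x + hscale \<i> y) (x + hscale \<i> y)) = 0" using pos_diag[OF fdom_add[OF F x iy]] by simp
  then have "Im (val_f t x (hscale \<i> y) + val_f t (hscale \<i> y) x) = 0"
    using fval_expand[OF F x iy] pos_diag[OF x] pos_diag[OF iy] by simp
  then have b: "Re (val_f t y x) = Re (val_f t x y)"
    using fval_hscale_left[OF F y x, of \<i>] fval_hscale_right[OF F y x, of \<i>] by simp
  show ?thesis using a b by (simp add: complex_eq_iff)
qed

lemma qf_add: "x \<in> dom_f t \<Longrightarrow> y \<in> dom_f t \<Longrightarrow>
   qf t (x + y) = qf t x + qf t y + 2 * Re (val_f t x y)"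
  using fval_expand[OF pos_form] pos_herm[of x y] unfolding qf_def by simp

lemma qf_diff: "x \<in> dom_f t \<Longrightarrow> y \<in> dom_f t \<Longrightarrow>
   qf t (x - y) = qf t x + qf t y - 2 * Re (val_f t x y)"
  using fval_expand_diff[OF pos_form] pos_herm[of x y] unfolding qf_def by simp

lemma qf_hscale: "qf t (hscale a x) = (cmod a)^2 * qf t x"
proof (cases "x \<in> dom_f t")
  case True
  then have "val_f t (hscale a x) (hscale a x) = a * cnj a * val_f t x x"
    using fval_hscale_left[OF pos_form] fval_hscale_right[OF pos_form] fdom_hscale[OF pos_form]
    by (simp add: mult.assoc)
  also have "\<dots> = complex_of_real ((cmod a)^2) * complex_of_real (qf t x)"
    by (simp only: complex_norm_square pos_diag[OF True])
  finally show ?thesis unfolding qf_def by (simp only: Re_complex_of_real flip: of_real_mult)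
next
  case False
  show ?thesis
  proof (cases "a = 0")
    case True then show ?thesis by (simp add: qf_def fval_zero_left[OF pos_form])
  next
    case a: False
    have "hscale a x \<notin> dom_f t"
    proof
      assume "hscale a x \<in> dom_f t"
      then have "hscale (inverse a) (hscale a x) \<in> dom_f t" by (rule fdom_hscale[OF pos_form])
      then show False using False a by (simp add: hscale_hscale hscale_one)
    qed
    then show ?thesis using False by (simp add: qf_out)
  qed
qed

lemma qf_minus: "qf t (- x) = qf t x"
  using qf_hscale[of "-1" x] by (simp add: hscale_minus_one)

lemma qf_zero[simp]: "qf t 0 = 0"
  using qf_hscale[of 0 0] by simp

lemma qf_scaleR: "qf t (scaleR r x) = r^2 * qf t x"
  using qf_hscale[of "complex_of_real r" x] by (simp add: hscale_of_real)

lemma qf_parallelogram: "x \<in> dom_f t \<Longrightarrow> y \<in> dom_f t \<Longrightarrow>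
   qf t (x + y) + qf t (x - y) = 2 * qf t x + 2 * qf t y"
  using qf_add qf_diff by simp

lemma pos_CS:
  assumes x: "x \<in> dom_f t" and y: "y \<in> dom_f t"
  shows "(cmod (val_f t x y))^2 \<le> qf t x * qf t y"
proof -
  have F: "is_form t" by (rule pos_form)
  have "(cmod (val_f t x y))^2 \<le> Re (val_f t x x) * Re (val_f t y y)"
  proof (rule generic_CS[where P = "\<lambda>a. val_f t (x - hscale a y) (x - hscale a y)"
        and hyx = "val_f t y x"])
    fix a
    have ay: "hscale a y \<in> dom_f t" by (rule fdom_hscale[OF F y])
    show "val_f t (x - hscale a y) (x - hscale a y) =
      val_f t x x - cnj a * val_f t x y - a * val_f t y x + a * cnj a * val_f t y y"
      using fval_expand_diff[OF F x ay] fval_hscale_left[OF F y] fval_hscale_right[OF F y]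
        fval_hscale_left[OF F y ay] fval_hscale_right[OF F y y] x
      by (simp add: algebra_simps)
    show "0 \<le> Re (val_f t (x - hscale a y) (x - hscale a y))"
      using qf_nonneg[of "x - hscale a y"] by (simp add: qf_def)
  qed (auto simp: pos_herm[OF x y] pos_diag[OF x] pos_diag[OF y] qf_nonneg qf_nonneg[unfolded qf_def])
  then show ?thesis by (simp add: qf_def)
qed

lemma pos_CS_Re:
  assumes x: "x \<in> dom_f t" and y: "y \<in> dom_f t"
  shows "\<bar>Re (val_f t x y)\<bar> \<le> sqrt (qf t x) * sqrt (qf t y)"
proof -
  have "\<bar>Re (val_f t x y)\<bar> \<le> cmod (val_f t x y)" by (rule abs_Re_le_cmod)
  also have "\<dots> = sqrt ((cmod (val_f t x y))^2)" by simp
  also have "\<dots> \<le> sqrt (qf t x * qf t y)" using pos_CS[OF x y] by (rule real_sqrt_le_mono)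
  finally show ?thesis by (simp add: real_sqrt_mult)
qed

lemma qf_sqrt_triangle:
  assumes x: "x \<in> dom_f t" and y: "y \<in> dom_f t"
  shows "sqrt (qf t (x + y)) \<le> sqrt (qf t x) + sqrt (qf t y)"
proof -
  have "qf t (x + y) \<le> (sqrt (qf t x) + sqrt (qf t y))^2"
    using qf_add[OF x y] pos_CS_Re[OF x y] qf_nonneg[of x] qf_nonneg[of y]
    by (simp add: power2_sum)
  then show ?thesis
    using qf_nonneg by (simp add: real_le_lsqrt)
qed

lemma qf_sqrt_diff:
  assumes x: "x \<in> dom_f t" and y: "y \<in> dom_f t"
  shows "\<bar>sqrt (qf t x) - sqrt (qf t y)\<bar> \<le> sqrt (qf t (x - y))"
proof -
  have F: "is_form t" by (rule pos_form)
  have "sqrt (qf t x) \<le> sqrt (qf t (x - y)) + sqrt (qf t y)"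
    using qf_sqrt_triangle[OF fdom_diff[OF F x y] y] by simp
  moreover have "sqrt (qf t y) \<le> sqrt (qf t (x - y)) + sqrt (qf t x)"
    using qf_sqrt_triangle[OF fdom_diff[OF F y x] x] qf_minus[of "x - y"] by simp
  ultimately show ?thesis unfolding abs_le_iff by linarith
qed

end

lemma pos_form_eq:
  assumes "positive_f t" "positive_f s" "dom_f t = dom_f s"
    and "\<And>x. x \<in> dom_f t \<Longrightarrow> qf t x = qf s x"
  shows "t = s"
proof (rule form_eq_diag[OF pos_form[OF assms(1)] pos_form[OF assms(2)] assms(3)])
  fix x assume x: "x \<in> dom_f t"
  then have xs: "x \<in> dom_f s" using assms(3) by simp
  show "val_f t x x = val_f s x x"
    using pos_diag[OF assms(1) x] pos_diag[OF assms(2) xs] assms(4)[OF x] by simp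
qed

lemma zero_f_simps[simp]: "dom_f zero_f = UNIV" "val_f zero_f x y = 0"
  by (simp_all add: zero_f_def)

lemma positive_zero_f: "positive_f zero_f"
  by (simp add: positive_f_def is_form_def csubspace_UNIV)

lemma bounded_zero_f: "bounded_f zero_f"
  by (auto simp: bounded_f_def bdd_above_def)

lemma zero_in_Vf: "zero_f \<in> Vf"
  by (simp add: Vf_def positive_zero_f)

lemma qf_zero_f[simp]: "qf zero_f x = 0" by (simp add: qf_def)

lemma add_f_simps: "dom_f (add_f t s) = dom_f t \<inter> dom_f s"
  "x \<in> dom_f t \<inter> dom_f s \<Longrightarrow> y \<in> dom_f t \<inter> dom_f s \<Longrightarrow> val_f (add_f t s) x y = val_f t x y + val_f s x y"
  by (simp_all add: add_f_def)

lemma positive_add_f: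
  assumes "positive_f t" "positive_f s" "closure (dom_f t \<inter> dom_f s) = UNIV"
  shows "positive_f (add_f t s)"
proof -
  have Ft: "is_form t" by (rule pos_form[OF assms(1)])
  have Fs: "is_form s" by (rule pos_form[OF assms(2)])
  let ?I = "dom_f t \<inter> dom_f s"
  have sub: "csubspace ?I" using csubspace_Int[OF is_formD(1)[OF Ft] is_formD(1)[OF Fs]] .
  have v: "val_f (add_f t s) x y = (if x \<in> ?I \<and> y \<in> ?I then val_f t x y + val_f s x y else 0)" for x y
    by (simp add: add_f_def)
  have I: "x \<in> ?I \<Longrightarrow> y \<in> ?I \<Longrightarrow> x + y \<in> ?I" "x \<in> ?I \<Longrightarrow> hscale a x \<in> ?I" for x y a
    using sub csubspace_add csubspace_hscale by blast+
  have 1: "val_f (add_f t s) (x + x') y = val_f (add_f t s) x y + val_f (add_f t s) x' y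
      \<and> val_f (add_f t s) y (x + x') = val_f (add_f t s) y x + val_f (add_f t s) y x'"
    if "x \<in> ?I" "x' \<in> ?I" "y \<in> ?I" for x x' y
    using that I(1)[OF that(1,2)] unfolding v
    by (simp add: fval_add_left[OF Ft] fval_add_left[OF Fs] fval_add_right[OF Ft] fval_add_right[OF Fs])
  have 2: "val_f (add_f t s) (hscale a x) y = a * val_f (add_f t s) x y
      \<and> val_f (add_f t s) y (hscale a x) = cnj a * val_f (add_f t s) y x"
    if "x \<in> ?I" "y \<in> ?I" for x y a
    using that I(2)[OF that(1)] unfolding v
    by (simp add: fval_hscale_left[OF Ft] fval_hscale_left[OF Fs] fval_hscale_right[OF Ft]
        fval_hscale_right[OF Fs] distrib_left)
  have 3: "Im (val_f (add_f t s) x x) = 0 \<and> 0 \<le> Re (val_f (add_f t s) x x)" if "x \<in> ?I" for x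
    using that unfolding v
    by (simp add: pos_diag[OF assms(1)] pos_diag[OF assms(2)] qf_nonneg[OF assms(1)] qf_nonneg[OF assms(2)])
  show ?thesis
    unfolding positive_f_def is_form_def add_f_simps(1)
    using sub assms(3) 1 2 3 by (auto simp: v)
qed

lemma qf_add_f: "x \<in> dom_f t \<inter> dom_f s \<Longrightarrow> qf (add_f t s) x = qf t x + qf s x"
  by (simp add: qf_def add_f_simps)

lemma add_f_commute: "add_f t s = add_f s t"
  unfolding add_f_def by (simp add: Int_commute conj_ac) (intro ext, simp add: add.commute)

lemma add_f_assoc: "add_f (add_f t s) u = add_f t (add_f s u)"
  by (auto simp: add_f_def add.assoc dom_f_def val_f_def intro!: ext)


lemma additive_bounded_linear:
  fixes h :: "real \<Rightarrow> real"
  assumes add: "\<And>a b. h (a + b) = h a + h b"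
    and bd: "\<And>r. 0 \<le> r \<Longrightarrow> r \<le> 1 \<Longrightarrow> \<bar>h r\<bar> \<le> C"
  shows "h r = r * h 1"
proof -
  define g where "g r = h r - r * h 1" for r
  have gadd: "g (a + b) = g a + g b" for a b by (simp add: g_def add algebra_simps)
  have g0: "g 0 = 0" using gadd[of 0 0] by simp
  have gneg: "g (- a) = - g a" for a using gadd[of a "-a"] g0 by simp
  have gnat: "g (real n * a) = real n * g a" for n a
    by (induction n) (auto simp: g0 distrib_right gadd)
  have g1: "g 1 = 0" by (simp add: g_def)
  have gint: "g (of_int k) = 0" for k
  proof (cases "k \<ge> 0")
    case True
    define n where "n = nat k"
    have "k = int n" using True by (simp add: n_def)
    then show ?thesis using gnat[of n 1] g1 by simp
  next
    case False
    define n where "n = nat (- k)"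
    have "k = - int n" using False by (simp add: n_def)
    then show ?thesis using gnat[of n 1] g1 gneg[of "real n"] by simp
  qed
  define C' where "C' = C + \<bar>h 1\<bar>"
  have gbd: "\<bar>g r\<bar> \<le> C'" for r
  proof -
    have "g r = g (r - of_int \<lfloor>r\<rfloor>) + g (of_int \<lfloor>r\<rfloor>)" using gadd[of "r - of_int \<lfloor>r\<rfloor>" "of_int \<lfloor>r\<rfloor>"] by simp
    then have e: "g r = g (r - of_int \<lfloor>r\<rfloor>)" using gint by simp
    have r0: "0 \<le> r - of_int \<lfloor>r\<rfloor>" "r - of_int \<lfloor>r\<rfloor> \<le> 1"
      using floor_correct[of r] unfolding of_int_add of_int_1 by linarith+
    have "\<bar>g (r - of_int \<lfloor>r\<rfloor>)\<bar> \<le> \<bar>h (r - of_int \<lfloor>r\<rfloor>)\<bar> + (r - of_int \<lfloor>r\<rfloor>) * \<bar>h 1\<bar>"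
      unfolding g_def using r0 abs_triangle_ineq4[of "h (r - of_int \<lfloor>r\<rfloor>)" "(r - of_int \<lfloor>r\<rfloor>) * h 1"]
      by (simp add: abs_mult)
    also have "\<dots> \<le> C + 1 * \<bar>h 1\<bar>"
      using bd[OF r0] r0 by (intro add_mono mult_right_mono) auto
    finally show ?thesis using e by (simp add: C'_def)
  qed
  have "g r = 0"
  proof (rule ccontr)
    assume ne: "g r \<noteq> 0"
    obtain n :: nat where n: "C' / \<bar>g r\<bar> < real n" using reals_Archimedean2 by blast
    have "real n * \<bar>g r\<bar> = \<bar>g (real n * r)\<bar>" using gnat[of n r] by (simp add: abs_mult)
    also have "\<dots> \<le> C'" by (rule gbd)
    finally have "real n * \<bar>g r\<bar> \<le> C'" .
    moreover have "C' < real n * \<bar>g r\<bar>" using n ne by (simp add: field_simps)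
    ultimately show False by simp
  qed
  then show ?thesis by (simp add: g_def)
qed

section \<open>A quadratic functional gives a form (Jordan--von Neumann)\<close>

lemma norm_parallelogram:
  fixes x y :: "'h::chilbert"
  shows "(norm (x + y))^2 + (norm (x - y))^2 = 2 * (norm x)^2 + 2 * (norm y)^2"
proof -
  have "(norm (x + y))^2 + (norm (x - y))^2 = Re (hinner (x + y) (x + y)) + Re (hinner (x - y) (x - y))"
    by (simp add: hinner_self_Re)
  also have "\<dots> = 2 * Re (hinner x x) + 2 * Re (hinner y y)"
    by (simp add: hinner_add_left hinner_add_right hinner_diff_left hinner_diff_right)
  finally show ?thesis by (simp add: hinner_self_Re)
qed

locale quadf =
  fixes E :: "'h::chilbert set" and f :: "'h \<Rightarrow> real"
  assumes sub: "csubspace E"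
    and hom: "\<And>a x. x \<in> E \<Longrightarrow> f (hscale a x) = (cmod a)^2 * f x"
    and par: "\<And>x y. x \<in> E \<Longrightarrow> y \<in> E \<Longrightarrow> f (x + y) + f (x - y) = 2 * f x + 2 * f y"
    and nonneg: "\<And>x. x \<in> E \<Longrightarrow> 0 \<le> f x"
begin

lemma E0: "0 \<in> E" and Eadd: "x \<in> E \<Longrightarrow> y \<in> E \<Longrightarrow> x + y \<in> E"
  and Ehs: "x \<in> E \<Longrightarrow> hscale a x \<in> E"
  and Eminus: "x \<in> E \<Longrightarrow> - x \<in> E"
  and Ediff: "x \<in> E \<Longrightarrow> y \<in> E \<Longrightarrow> x - y \<in> E"
  and EscR: "x \<in> E \<Longrightarrow> scaleR r x \<in> E"
  by (rule csubspace_0[OF sub] csubspace_add[OF sub] csubspace_hscale[OF sub]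
      csubspace_minus[OF sub] csubspace_diff[OF sub] csubspace_scaleR[OF sub]; assumption)+

lemma f_minus: "x \<in> E \<Longrightarrow> f (- x) = f x"
  using hom[of x "-1"] by (simp add: hscale_minus_one)

lemma f_zero: "f 0 = 0"
  using hom[OF E0, of 0] by simp

lemma f_scaleR: "x \<in> E \<Longrightarrow> f (scaleR r x) = r^2 * f x"
  using hom[of x "complex_of_real r"] by (simp add: hscale_of_real)

definition R :: "'h \<Rightarrow> 'h \<Rightarrow> real" where
  "R x y = (f (x + y) - f (x - y)) / 4"

lemma R_sym: "x \<in> E \<Longrightarrow> y \<in> E \<Longrightarrow> R x y = R y x"
  unfolding R_def using f_minus[OF Ediff, of x y] by (simp add: add.commute)

lemma R_self: "x \<in> E \<Longrightarrow> R x x = f x"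
  unfolding R_def using f_scaleR[of x 2] f_zero by (simp add: scaleR_2)

lemma R_zero: "y \<in> E \<Longrightarrow> R 0 y = 0"
  unfolding R_def using f_minus by simp

lemma R_bound: "u \<in> E \<Longrightarrow> y \<in> E \<Longrightarrow> \<bar>R u y\<bar> \<le> (f u + f y) / 2"
  unfolding R_def using par[of u y] nonneg[OF Eadd, of u y] nonneg[OF Ediff, of u y] by auto

lemma R_half:
  assumes x: "x \<in> E" and y: "y \<in> E" and z: "z \<in> E"
  shows "R (x + z) y + R (x - z) y = 2 * R x y"
proof -
  have p1: "f (x + y + z) + f (x + y - z) = 2 * f (x + y) + 2 * f z"
    using par[OF Eadd[OF x y] z] .
  have p2: "f (x - y + z) + f (x - y - z) = 2 * f (x - y) + 2 * f z"
    using par[OF Ediff[OF x y] z] .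
  have a: "x + z + y = x + y + z" "x + z - y = x - y + z" "x - z + y = x + y - z" "x - z - y = x - y - z"
    by (simp_all add: algebra_simps)
  show ?thesis unfolding R_def a using p1 p2 by argo
qed

lemma R_add_left:
  assumes a: "a \<in> E" and b: "b \<in> E" and y: "y \<in> E"
  shows "R (a + b) y = R a y + R b y"
proof -
  define x where "x = scaleR (1/2) (a + b)"
  define z where "z = scaleR (1/2) (a - b)"
  have xE: "x \<in> E" and zE: "z \<in> E" unfolding x_def z_def using a b by (auto intro: EscR Eadd Ediff)
  have "x + z = a" "x - z = b" "x + x = a + b" unfolding x_def z_def
    by (simp_all add: algebra_simps flip: scaleR_add_right scaleR_diff_right)
      (simp_all add: scaleR_add_right scaleR_diff_right algebra_simps flip: scaleR_add_left)
  moreover have "R (x + x) y = 2 * R x y" using R_half[OF xE y xE] R_zero[OF y] by simp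
  ultimately show ?thesis using R_half[OF xE y zE] by simp
qed

lemma R_scaleR_left:
  assumes x: "x \<in> E" and y: "y \<in> E"
  shows "R (scaleR r x) y = r * R x y"
proof -
  define h where "h r = R (scaleR r x) y" for r
  have "h r = r * h 1"
  proof (rule additive_bounded_linear[where C = "(f x + f y) / 2"])
    show "h (a + b) = h a + h b" for a b
      unfolding h_def by (simp add: scaleR_add_left R_add_left EscR x y)
    show "\<bar>h r\<bar> \<le> (f x + f y) / 2" if "0 \<le> r" "r \<le> 1" for r
    proof -
      have "\<bar>h r\<bar> \<le> (r^2 * f x + f y) / 2"
        unfolding h_def using R_bound[OF EscR[OF x] y, of r] f_scaleR[OF x, of r] by simp
      also have "\<dots> \<le> (f x + f y) / 2"
        using that nonneg[OF x] by (intro divide_right_mono add_right_mono mult_left_le_one_le) (auto simp: power_le_one)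
      finally show ?thesis .
    qed
  qed
  then show ?thesis by (simp add: h_def)
qed

lemma hs_i_i: "hscale \<i> (hscale \<i> y) = - y"
  by (simp add: hscale_hscale hscale_minus_one)

lemma R_ii: "x \<in> E \<Longrightarrow> y \<in> E \<Longrightarrow> R (hscale \<i> x) (hscale \<i> y) = R x y"
  unfolding R_def using hom[of "x + y" \<i>] hom[of "x - y" \<i>] Eadd Ediff
  by (simp add: hscale_add_right hscale_diff_right)

lemma R_i_swap: "x \<in> E \<Longrightarrow> y \<in> E \<Longrightarrow> R (hscale \<i> x) y = - R x (hscale \<i> y)"
proof -
  assume x: "x \<in> E" and y: "y \<in> E"
  have iy: "hscale \<i> y \<in> E" by (rule Ehs[OF y])
  have 1: "hscale \<i> x + y = hscale \<i> (x - hscale \<i> y)"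
    by (simp add: hscale_diff_right hs_i_i)
  have 2: "hscale \<i> x - y = hscale \<i> (x + hscale \<i> y)"
    by (simp add: hscale_add_right hs_i_i)
  have h1: "f (hscale \<i> (x - hscale \<i> y)) = f (x - hscale \<i> y)"
    using hom[OF Ediff[OF x iy], of \<i>] by simp
  have h2: "f (hscale \<i> (x + hscale \<i> y)) = f (x + hscale \<i> y)"
    using hom[OF Eadd[OF x iy], of \<i>] by simp
  show ?thesis unfolding R_def 1 2 using h1 h2 by argo
qed

lemma R_neg_right: "R x (- y) = - R x y"
proof -
  have e: "f (x + - y) = f (x - y)" "f (x - - y) = f (x + y)" by simp_all
  show ?thesis unfolding R_def e by argo
qed

definition B :: "'h \<Rightarrow> 'h \<Rightarrow> complex" where
  "B x y = complex_of_real (R x y) + \<i> * complex_of_real (R x (hscale \<i> y))"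

lemma B_add_left: "x \<in> E \<Longrightarrow> x' \<in> E \<Longrightarrow> y \<in> E \<Longrightarrow> B (x + x') y = B x y + B x' y"
  unfolding B_def by (simp add: R_add_left Ehs algebra_simps)

lemma B_scaleR_left: "x \<in> E \<Longrightarrow> y \<in> E \<Longrightarrow> B (scaleR r x) y = complex_of_real r * B x y"
  unfolding B_def by (simp add: R_scaleR_left Ehs algebra_simps)

lemma B_i_left: "x \<in> E \<Longrightarrow> y \<in> E \<Longrightarrow> B (hscale \<i> x) y = \<i> * B x y"
  unfolding B_def by (simp add: R_ii R_i_swap Ehs hs_i_i R_neg_right algebra_simps)

lemma hscale_decomp: "hscale a x = scaleR (Re a) x + scaleR (Im a) (hscale \<i> x)"
proof -
  have "a = complex_of_real (Re a) + complex_of_real (Im a) * \<i>" by (simp add: complex_eq_iff)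
  then have "hscale a x = hscale (complex_of_real (Re a)) x + hscale (complex_of_real (Im a) * \<i>) x"
    by (metis hscale_add_left)
  also have "\<dots> = scaleR (Re a) x + scaleR (Im a) (hscale \<i> x)"
    by (simp add: hscale_of_real flip: hscale_hscale)
  finally show ?thesis .
qed

lemma B_hscale_left: "x \<in> E \<Longrightarrow> y \<in> E \<Longrightarrow> B (hscale a x) y = a * B x y"
proof -
  assume x: "x \<in> E" and y: "y \<in> E"
  have "B (hscale a x) y = B (scaleR (Re a) x) y + B (scaleR (Im a) (hscale \<i> x)) y"
    unfolding hscale_decomp[of a x] by (rule B_add_left) (auto intro: EscR Ehs x y)
  also have "\<dots> = complex_of_real (Re a) * B x y + complex_of_real (Im a) * (\<i> * B x y)"
    by (simp add: B_scaleR_left B_i_left Ehs x y)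
  also have "\<dots> = a * B x y"
    by (subst (3) complex_eq[of a]) (simp add: algebra_simps)
  finally show ?thesis .
qed

lemma B_sym: "x \<in> E \<Longrightarrow> y \<in> E \<Longrightarrow> B y x = cnj (B x y)"
  unfolding B_def by (simp add: R_sym[of x y] R_sym[of y "hscale \<i> x"] R_i_swap Ehs)

lemma B_diag: "x \<in> E \<Longrightarrow> B x x = complex_of_real (f x)"
proof -
  assume x: "x \<in> E"
  have a: "x + hscale \<i> x = hscale (1 + \<i>) x" "x - hscale \<i> x = hscale (1 - \<i>) x"
    by (simp_all add: hscale_add_left hscale_diff_left hscale_one)
  have c: "(cmod (1 + \<i>))^2 = 2" "(cmod (1 - \<i>))^2 = 2" by (simp_all add: cmod_def)
  have "R x (hscale \<i> x) = 0" unfolding R_def a using hom[OF x, of "1 + \<i>"] hom[OF x, of "1 - \<i>"] c by simp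
  then show ?thesis unfolding B_def using R_self[OF x] by simp
qed

definition formE :: "'h form" where
  "formE = (E, \<lambda>x y. if x \<in> E \<and> y \<in> E then B x y else 0)"

lemma formE_simps: "dom_f formE = E" "x \<in> E \<Longrightarrow> y \<in> E \<Longrightarrow> val_f formE x y = B x y"
  by (simp_all add: formE_def)

lemma B_add_right: "x \<in> E \<Longrightarrow> x' \<in> E \<Longrightarrow> y \<in> E \<Longrightarrow> B y (x + x') = B y x + B y x'"
  using B_sym B_add_left Eadd by (metis complex_cnj_add)

lemma B_hscale_right: "x \<in> E \<Longrightarrow> y \<in> E \<Longrightarrow> B y (hscale a x) = cnj a * B y x"
  using B_sym B_hscale_left Ehs by (metis complex_cnj_mult)

lemma positive_formE:
  assumes "closure E = UNIV"
  shows "positive_f formE"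
  unfolding positive_f_def is_form_def formE_simps(1)
  using sub assms
  by (auto simp: formE_def B_add_left B_add_right B_hscale_left B_hscale_right Eadd Ehs B_diag nonneg)

lemma qf_formE: "x \<in> E \<Longrightarrow> qf formE x = f x"
  by (simp add: qf_def formE_simps B_diag)

end


section \<open>The lower semicontinuous envelope of a positive form\<close>

definition gq :: "'h::chilbert form \<Rightarrow> 'h \<Rightarrow> real \<Rightarrow> real" where
  "gq t x e = Inf {qf t z | z. z \<in> dom_f t \<and> dist z x < e}"

definition env :: "'h::chilbert form \<Rightarrow> 'h \<Rightarrow> real" where
  "env t x = Sup {gq t x e | e. e > 0}"

definition Dt :: "'h::chilbert form \<Rightarrow> 'h set" where
  "Dt t = {x. bdd_above {gq t x e | e. e > 0}}"

lemma dist_hscale: "dist (hscale a z) (hscale a x) = cmod a * dist z x"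
  by (simp add: dist_norm norm_hscale flip: hscale_diff_right)

context
  fixes t :: "'h::chilbert form"
  assumes P: "positive_f t"
begin

lemma dense_dom: "closure (dom_f t) = UNIV"
  using is_formD(2)[OF pos_form[OF P]] .

lemma approx: "e > 0 \<Longrightarrow> \<exists>z\<in>dom_f t. dist z x < e"
  using dense_dom closure_approachable[of x "dom_f t"] by auto

lemma gq_ne: "e > 0 \<Longrightarrow> {qf t z | z. z \<in> dom_f t \<and> dist z x < e} \<noteq> {}"
  using approx by blast

lemma gq_bdd: "bdd_below {qf t z | z. z \<in> dom_f t \<and> dist z x < e}"
  using qf_nonneg[OF P] by (auto intro!: bdd_belowI[of _ 0])

lemma gq_le: "z \<in> dom_f t \<Longrightarrow> dist z x < e \<Longrightarrow> gq t x e \<le> qf t z"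
  unfolding gq_def by (rule cInf_lower[OF _ gq_bdd]) blast

lemma gq_greatest: "e > 0 \<Longrightarrow> (\<And>z. z \<in> dom_f t \<Longrightarrow> dist z x < e \<Longrightarrow> M \<le> qf t z) \<Longrightarrow> M \<le> gq t x e"
  unfolding gq_def by (rule cInf_greatest[OF gq_ne]) auto

lemma gq_nonneg: "e > 0 \<Longrightarrow> 0 \<le> gq t x e"
  by (rule gq_greatest) (auto simp: qf_nonneg[OF P])

lemma gq_lessD: "e > 0 \<Longrightarrow> gq t x e < M \<Longrightarrow> \<exists>z\<in>dom_f t. dist z x < e \<and> qf t z < M"
  unfolding gq_def using cInf_lessD[OF gq_ne] by blast

lemma gq_shift: "e' > 0 \<Longrightarrow> dist y x + e' \<le> e \<Longrightarrow> gq t x e \<le> gq t y e'"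
proof (rule gq_greatest)
  fix z assume "e' > 0" "dist y x + e' \<le> e" "z \<in> dom_f t" "dist z y < e'"
  moreover have "dist z x \<le> dist z y + dist y x" by (rule dist_triangle)
  ultimately show "gq t x e \<le> qf t z" by (intro gq_le) auto
qed

lemma gq_mono: "0 < e \<Longrightarrow> e \<le> e' \<Longrightarrow> gq t x e' \<le> gq t x e"
  using gq_shift[of e x x e'] by simp

lemma env_set_ne: "{gq t x e | e. e > 0} \<noteq> {}"
  by (auto intro: exI[of _ 1])

lemma env_upper: "x \<in> Dt t \<Longrightarrow> e > 0 \<Longrightarrow> gq t x e \<le> env t x"
  unfolding env_def Dt_def by (rule cSup_upper) auto

lemma env_least: "(\<And>e. e > 0 \<Longrightarrow> gq t x e \<le> M) \<Longrightarrow> x \<in> Dt t \<and> env t x \<le> M"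
proof
  assume h: "\<And>e. e > 0 \<Longrightarrow> gq t x e \<le> M"
  show "x \<in> Dt t" unfolding Dt_def using h by (auto intro!: bdd_aboveI[of _ M])
  show "env t x \<le> M" unfolding env_def by (rule cSup_least[OF env_set_ne]) (auto intro: h)
qed

lemma env_nonneg: "x \<in> Dt t \<Longrightarrow> 0 \<le> env t x"
  using env_upper[of x 1] gq_nonneg[of 1 x] by simp

lemma dom_sub_Dt: "x \<in> dom_f t \<Longrightarrow> x \<in> Dt t \<and> env t x \<le> qf t x"
  by (rule env_least) (simp add: gq_le)

lemma env_ge_lsc:
  assumes x: "x \<in> Dt t" and "e > 0" and "\<And>z. z \<in> dom_f t \<Longrightarrow> dist z x < e \<Longrightarrow> M \<le> qf t z"
  shows "M \<le> env t x"
proof -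
  have "M \<le> gq t x e" by (rule gq_greatest[OF assms(2)]) (rule assms(3))
  then show ?thesis using env_upper[OF x assms(2)] by simp
qed

lemma env_zero: "0 \<in> Dt t \<and> env t 0 = 0"
  using dom_sub_Dt[OF fdom_0[OF pos_form[OF P]]] env_nonneg qf_zero[OF P] by force

lemma gq_hscale_le:
  assumes a: "a \<noteq> 0" and e: "e > 0"
  shows "gq t (hscale a x) (cmod a * e) \<le> (cmod a)^2 * gq t x e"
proof -
  have ca: "(cmod a)^2 > 0" using a by simp
  have "gq t (hscale a x) (cmod a * e) / (cmod a)^2 \<le> gq t x e"
  proof (rule gq_greatest[OF e])
    fix z assume z: "z \<in> dom_f t" "dist z x < e"
    have "gq t (hscale a x) (cmod a * e) \<le> qf t (hscale a z)"
      using z a by (intro gq_le) (auto simp: fdom_hscale[OF pos_form[OF P]] dist_hscale)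
    also have "\<dots> = (cmod a)^2 * qf t z" by (rule qf_hscale[OF P])
    finally show "gq t (hscale a x) (cmod a * e) / (cmod a)^2 \<le> qf t z"
      using ca by (simp add: field_simps)
  qed
  then show ?thesis using ca by (simp add: field_simps)
qed

lemma env_hscale_le:
  assumes a: "a \<noteq> 0" and x: "x \<in> Dt t"
  shows "hscale a x \<in> Dt t \<and> env t (hscale a x) \<le> (cmod a)^2 * env t x"
proof (rule env_least)
  fix e :: real assume e: "e > 0"
  have ca: "cmod a > 0" using a by simp
  have "gq t (hscale a x) e = gq t (hscale a x) (cmod a * (e / cmod a))" using ca by simp
  also have "\<dots> \<le> (cmod a)^2 * gq t x (e / cmod a)" by (rule gq_hscale_le[OF a]) (use e ca in simp)
  also have "\<dots> \<le> (cmod a)^2 * env t x" using env_upper[OF x] e ca by (intro mult_left_mono) auto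
  finally show "gq t (hscale a x) e \<le> (cmod a)^2 * env t x" .
qed

lemma env_hscale:
  assumes x: "x \<in> Dt t"
  shows "hscale a x \<in> Dt t \<and> env t (hscale a x) = (cmod a)^2 * env t x"
proof (cases "a = 0")
  case True then show ?thesis using env_zero by simp
next
  case False
  have 1: "hscale a x \<in> Dt t" "env t (hscale a x) \<le> (cmod a)^2 * env t x"
    using env_hscale_le[OF False x] by auto
  have "env t (hscale (inverse a) (hscale a x)) \<le> (cmod (inverse a))^2 * env t (hscale a x)"
    using env_hscale_le[OF _ 1(1), of "inverse a"] False by simp
  then have "env t x \<le> (inverse (cmod a))^2 * env t (hscale a x)"
    using False by (simp add: hscale_hscale hscale_one norm_inverse)
  then have "(cmod a)^2 * env t x \<le> env t (hscale a x)"
    using False by (simp add: field_simps power_inverse)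
  then show ?thesis using 1 by simp
qed

lemma gq_par:
  assumes e: "e > 0"
  shows "gq t (x + y) e + gq t (x - y) e \<le> 2 * gq t x (e/2) + 2 * gq t y (e/2)"
proof -
  have F: "is_form t" by (rule pos_form[OF P])
  have e2: "e / 2 > 0" using e by simp
  have key: "gq t (x + y) e + gq t (x - y) e \<le> 2 * qf t z1 + 2 * qf t z2"
    if z1: "z1 \<in> dom_f t" "dist z1 x < e/2" and z2: "z2 \<in> dom_f t" "dist z2 y < e/2" for z1 z2
  proof -
    have eq: "z1 + z2 - (x + y) = (z1 - x) + (z2 - y)" by (simp add: algebra_simps)
    have "dist (z1 + z2) (x + y) \<le> dist z1 x + dist z2 y"
      unfolding dist_norm eq by (rule norm_triangle_ineq)
    then have d1: "dist (z1 + z2) (x + y) < e" using z1 z2 by simp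
    have eq2: "z1 - z2 - (x - y) = (z1 - x) - (z2 - y)" by (simp add: algebra_simps)
    have "dist (z1 - z2) (x - y) \<le> dist z1 x + dist z2 y"
      unfolding dist_norm eq2 by (rule norm_triangle_ineq4)
    then have d2: "dist (z1 - z2) (x - y) < e" using z1 z2 by simp
    have "gq t (x + y) e + gq t (x - y) e \<le> qf t (z1 + z2) + qf t (z1 - z2)"
      using gq_le[OF fdom_add[OF F z1(1) z2(1)] d1] gq_le[OF fdom_diff[OF F z1(1) z2(1)] d2] by simp
    also have "\<dots> = 2 * qf t z1 + 2 * qf t z2" by (rule qf_parallelogram[OF P z1(1) z2(1)])
    finally show ?thesis .
  qed
  have step: "(gq t (x + y) e + gq t (x - y) e - 2 * qf t z2) / 2 \<le> gq t x (e/2)"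
    if z2: "z2 \<in> dom_f t" "dist z2 y < e/2" for z2
  proof (rule gq_greatest[OF e2])
    fix z assume "z \<in> dom_f t" "dist z x < e/2"
    then have "gq t (x + y) e + gq t (x - y) e \<le> 2 * qf t z + 2 * qf t z2" by (rule key[OF _ _ z2])
    then show "(gq t (x + y) e + gq t (x - y) e - 2 * qf t z2) / 2 \<le> qf t z" by simp
  qed
  have "(gq t (x + y) e + gq t (x - y) e - 2 * gq t x (e/2)) / 2 \<le> gq t y (e/2)"
  proof (rule gq_greatest[OF e2])
    fix z assume "z \<in> dom_f t" "dist z y < e/2"
    then have "(gq t (x + y) e + gq t (x - y) e - 2 * qf t z) / 2 \<le> gq t x (e/2)" by (rule step)
    then show "(gq t (x + y) e + gq t (x - y) e - 2 * gq t x (e/2)) / 2 \<le> qf t z" by simp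
  qed
  then show ?thesis by simp
qed

lemma env_par_le:
  assumes x: "x \<in> Dt t" and y: "y \<in> Dt t"
  shows "x + y \<in> Dt t \<and> x - y \<in> Dt t \<and> env t (x + y) + env t (x - y) \<le> 2 * env t x + 2 * env t y"
proof -
  have b: "gq t (x + y) e1 + gq t (x - y) e2 \<le> 2 * env t x + 2 * env t y"
    if "e1 > 0" "e2 > 0" for e1 e2
  proof -
    define m where "m = min e1 e2"
    have m: "m > 0" "m \<le> e1" "m \<le> e2" using that by (auto simp: m_def)
    have "gq t (x + y) e1 + gq t (x - y) e2 \<le> gq t (x + y) m + gq t (x - y) m"
      using gq_mono m by (intro add_mono) auto
    also have "\<dots> \<le> 2 * gq t x (m/2) + 2 * gq t y (m/2)" by (rule gq_par[OF m(1)])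
    also have "\<dots> \<le> 2 * env t x + 2 * env t y"
      using env_upper[OF x, of "m/2"] env_upper[OF y, of "m/2"] m by simp
    finally show ?thesis .
  qed
  have 1: "x + y \<in> Dt t \<and> env t (x + y) \<le> 2 * env t x + 2 * env t y - gq t (x - y) e2" if "e2 > 0" for e2
    by (rule env_least) (use b[OF _ that] in force)
  have 2: "x - y \<in> Dt t \<and> env t (x - y) \<le> 2 * env t x + 2 * env t y - env t (x + y)"
    by (rule env_least) (use 1 in force)
  show ?thesis using 1[of 1] 2 by simp
qed

lemma env_par:
  assumes x: "x \<in> Dt t" and y: "y \<in> Dt t"
  shows "env t (x + y) + env t (x - y) = 2 * env t x + 2 * env t y"
proof -
  have a: "x + y \<in> Dt t" "x - y \<in> Dt t" using env_par_le[OF x y] by auto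
  have "env t ((x + y) + (x - y)) + env t ((x + y) - (x - y)) \<le> 2 * env t (x + y) + 2 * env t (x - y)"
    using env_par_le[OF a] by simp
  moreover have "(x + y) + (x - y) = hscale 2 x" "(x + y) - (x - y) = hscale 2 y"
    using hscale_of_real[of 2 x] hscale_of_real[of 2 y] by (simp_all add: scaleR_2)
  moreover have "env t (hscale 2 x) = 4 * env t x" "env t (hscale 2 y) = 4 * env t y"
    using env_hscale[OF x, of 2] env_hscale[OF y, of 2] by simp_all
  ultimately have "4 * env t x + 4 * env t y \<le> 2 * env t (x + y) + 2 * env t (x - y)" by simp
  then show ?thesis using env_par_le[OF x y] by simp
qed

lemma quadf_env: "quadf (Dt t) (env t)"
proof
  show "csubspace (Dt t)" unfolding csubspace_def
  proof (intro conjI ballI allI)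
    show "0 \<in> Dt t" using env_zero by simp
    show "x + y \<in> Dt t" if "x \<in> Dt t" "y \<in> Dt t" for x y using env_par_le[OF that] by simp
    show "hscale a x \<in> Dt t" if "x \<in> Dt t" for a x using env_hscale[OF that] by simp
  qed
  show "env t (hscale a x) = (cmod a)^2 * env t x" if "x \<in> Dt t" for a x
    using env_hscale[OF that] by simp
  show "env t (x + y) + env t (x - y) = 2 * env t x + 2 * env t y" if "x \<in> Dt t" "y \<in> Dt t" for x y
    by (rule env_par[OF that])
  show "0 \<le> env t x" if "x \<in> Dt t" for x by (rule env_nonneg[OF that])
qed

lemma env_lsc:
  assumes Y: "\<And>m. Y m \<in> Dt t" and lim: "Y \<longlonglongrightarrow> y" and ev: "eventually (\<lambda>m. env t (Y m) \<le> M) sequentially"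
  shows "y \<in> Dt t \<and> env t y \<le> M"
proof (rule env_least)
  fix e :: real assume e: "e > 0"
  have "eventually (\<lambda>m. dist (Y m) y < e/2) sequentially"
    using tendstoD[OF lim, of "e/2"] e by simp
  with ev have "eventually (\<lambda>m. dist (Y m) y < e/2 \<and> env t (Y m) \<le> M) sequentially"
    by (rule eventually_conj[rotated])
  then obtain m where m: "dist (Y m) y < e/2" "env t (Y m) \<le> M"
    by (auto simp: eventually_sequentially)
  have "gq t y e \<le> gq t (Y m) (e/2)" using m e by (intro gq_shift) auto
  also have "\<dots> \<le> env t (Y m)" using env_upper[OF Y] e by simp
  finally show "gq t y e \<le> M" using m by simp
qed

end


lemma dom_unit:
  fixes s :: "'h::chilbert form"
  assumes P: "positive_f s" and v: "(v::'h::chilbert) \<noteq> 0"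
  shows "\<exists>x\<in>dom_f s. norm x = 1"
proof -
  obtain z :: 'h where z: "z \<in> dom_f s" "dist z v < norm v" using approx[OF P, of "norm v" v] v by auto
  have "z \<noteq> 0" using z(2) by auto
  then have "norm (hscale (complex_of_real (1 / norm z)) z) = 1" by (simp add: norm_hscale norm_divide)
  moreover have "hscale (complex_of_real (1 / norm z)) z \<in> dom_f s"
    by (rule fdom_hscale[OF pos_form[OF P] z(1)])
  ultimately show ?thesis by blast
qed

lemma m_f_nonneg:
  fixes s :: "'h::chilbert form"
  assumes P: "positive_f s" and v: "(v::'h::chilbert) \<noteq> 0"
  shows "0 \<le> m_f s"
proof -
  obtain x where x: "x \<in> dom_f s" "norm x = 1" using dom_unit[OF P v] by blast
  show ?thesis unfolding m_f_def
    by (rule cInf_greatest) (use x in \<open>auto simp: qf_nonneg[OF P, unfolded qf_def]\<close>)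
qed

lemma tnorm_qf: "tnorm s x = sqrt (qf s x + (1 + m_f s) * (norm x)^2)"
  by (simp add: tnorm_def qf_def)

context
  fixes s :: "'h::chilbert form" and v :: 'h
  assumes P: "positive_f s" and v: "v \<noteq> 0"
begin

lemma tnorm_sq: "(tnorm s x)^2 = qf s x + (1 + m_f s) * (norm x)^2"
proof -
  have h: "0 \<le> qf s x + (1 + m_f s) * (norm x)^2"
    using qf_nonneg[OF P, of x] m_f_nonneg[OF P v] by (intro add_nonneg_nonneg mult_nonneg_nonneg) auto
  show ?thesis unfolding tnorm_qf using h by (rule real_sqrt_pow2)
qed

lemma tnorm_nonneg: "0 \<le> tnorm s x"
  unfolding tnorm_qf using qf_nonneg[OF P, of x] m_f_nonneg[OF P v] by simp

lemma norm_le_tnorm: "norm x \<le> tnorm s x"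
proof -
  have "(norm x)^2 \<le> (tnorm s x)^2"
    unfolding tnorm_sq using qf_nonneg[OF P, of x] mult_nonneg_nonneg[OF m_f_nonneg[OF P v] zero_le_power2[of "norm x"]]
    by (simp add: distrib_right)
  then show ?thesis by (rule power2_le_imp_le) (rule tnorm_nonneg)
qed

lemma qf_le_tnorm: "qf s x \<le> (tnorm s x)^2"
  unfolding tnorm_sq using m_f_nonneg[OF P v] by simp

end

definition restr :: "'h::chilbert form \<Rightarrow> 'h set \<Rightarrow> 'h form" where
  "restr s D = (D, \<lambda>x y. if x \<in> D \<and> y \<in> D then val_f s x y else 0)"

lemma restr_simps: "dom_f (restr s D) = D" "x \<in> D \<Longrightarrow> y \<in> D \<Longrightarrow> val_f (restr s D) x y = val_f s x y"
  by (simp_all add: restr_def)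

lemma qf_restr: "x \<in> D \<Longrightarrow> qf (restr s D) x = qf s x"
  by (simp add: qf_def restr_simps)

lemma positive_restr:
  assumes P: "positive_f s" and D: "csubspace D" "D \<subseteq> dom_f s" "closure D = UNIV"
  shows "positive_f (restr s D)"
proof -
  have F: "is_form s" by (rule pos_form[OF P])
  have in_s: "x \<in> D \<Longrightarrow> x \<in> dom_f s" for x using D(2) by auto
  have Dadd: "x \<in> D \<Longrightarrow> y \<in> D \<Longrightarrow> x + y \<in> D" and Dhs: "x \<in> D \<Longrightarrow> hscale a x \<in> D" for x y a
    using csubspace_add[OF D(1)] csubspace_hscale[OF D(1)] by blast+
  show ?thesis
    unfolding positive_f_def is_form_def restr_simps(1)
  proof (intro conjI allI ballI impI D(1) D(3))
    fix x y assume "\<not> (x \<in> D \<and> y \<in> D)" then show "val_f (restr s D) x y = 0" by (auto simp: restr_def)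
  next
    fix x x' y assume h: "x \<in> D" "x' \<in> D" "y \<in> D"
    show "val_f (restr s D) (x + x') y = val_f (restr s D) x y + val_f (restr s D) x' y"
      using h Dadd[OF h(1,2)] by (simp add: restr_simps fval_add_left[OF F] in_s)
    show "val_f (restr s D) y (x + x') = val_f (restr s D) y x + val_f (restr s D) y x'"
      using h Dadd[OF h(1,2)] by (simp add: restr_simps fval_add_right[OF F] in_s)
  next
    fix a x y assume h: "x \<in> D" "y \<in> D"
    show "val_f (restr s D) (hscale a x) y = a * val_f (restr s D) x y"
      using h Dhs[OF h(1)] by (simp add: restr_simps fval_hscale_left[OF F] in_s)
    show "val_f (restr s D) y (hscale a x) = cnj a * val_f (restr s D) y x"
      using h Dhs[OF h(1)] by (simp add: restr_simps fval_hscale_right[OF F] in_s)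
  next
    fix x assume h: "x \<in> D"
    show "Im (val_f (restr s D) x x) = 0" "0 \<le> Re (val_f (restr s D) x x)"
      using h P in_s[OF h] by (auto simp: restr_simps positive_f_def)
  qed
qed

lemma extends_restr: "D \<subseteq> dom_f s \<Longrightarrow> extends_f s (restr s D)"
  by (simp add: extends_f_def restr_simps)

definition envform :: "'h::chilbert form \<Rightarrow> 'h form" where
  "envform t = quadf.formE (Dt t) (env t)"

context
  fixes t :: "'h::chilbert form" and v :: 'h
  assumes P: "positive_f t" and v: "v \<noteq> 0"
begin

lemma Dt_dense: "closure (Dt t) = UNIV"
proof -
  have "dom_f t \<subseteq> Dt t" using dom_sub_Dt[OF P] by auto
  then have "closure (dom_f t) \<subseteq> closure (Dt t)" by (rule closure_mono)
  then show ?thesis using dense_dom[OF P] by auto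
qed

lemma envform_eq: "envform t = quadf.formE (Dt t) (env t)"
  by (simp add: envform_def)

lemma envform_pos: "positive_f (envform t)"
  unfolding envform_eq using quadf.positive_formE[OF quadf_env[OF P] Dt_dense] .

lemma envform_dom: "dom_f (envform t) = Dt t"
  unfolding envform_eq using quadf.formE_simps(1)[OF quadf_env[OF P]] .

lemma envform_qf: "x \<in> Dt t \<Longrightarrow> qf (envform t) x = env t x"
  unfolding envform_eq using quadf.qf_formE[OF quadf_env[OF P]] .

lemma envform_closed: "closed_f (envform t)"
  unfolding closed_f_def
proof (intro conjI allI impI envform_pos)
  let ?F = "envform t"
  have PF: "positive_f ?F" by (rule envform_pos)
  have QE: "quadf (Dt t) (env t)" by (rule quadf_env[OF P])
  fix X :: "nat \<Rightarrow> 'h"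
  assume "(\<forall>n. X n \<in> dom_f ?F) \<and> (\<forall>e>0. \<exists>N. \<forall>m\<ge>N. \<forall>n\<ge>N. tnorm ?F (X m - X n) < e)"
  then have XD: "\<And>n. X n \<in> Dt t" and XC: "\<And>e. e > 0 \<Longrightarrow> \<exists>N. \<forall>m\<ge>N. \<forall>n\<ge>N. tnorm ?F (X m - X n) < e"
    by (auto simp: envform_dom)
  have "Cauchy X"
    unfolding Cauchy_def
  proof (intro allI impI)
    fix e :: real assume "e > 0"
    then obtain N where N: "\<forall>m\<ge>N. \<forall>n\<ge>N. tnorm ?F (X m - X n) < e" using XC by blast
    show "\<exists>M. \<forall>m\<ge>M. \<forall>n\<ge>M. dist (X m) (X n) < e"
      using N norm_le_tnorm[OF PF v] by (intro exI[of _ N]) (auto simp: dist_norm intro: le_less_trans)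
  qed
  then obtain x where lim: "X \<longlonglongrightarrow> x" using Cauchy_convergent_iff convergent_def by blast
  have key: "\<exists>N. \<forall>n\<ge>N. X n - x \<in> Dt t \<and> env t (X n - x) \<le> e^2" if e: "e > 0" for e
  proof -
    obtain N where N: "\<forall>m\<ge>N. \<forall>n\<ge>N. tnorm ?F (X m - X n) < e" using XC[OF e] by blast
    have "X n - x \<in> Dt t \<and> env t (X n - x) \<le> e^2" if n: "n \<ge> N" for n
    proof (rule env_lsc[OF P])
      show "X n - X m \<in> Dt t" for m using XD quadf.Ediff[OF QE] by blast
      show "(\<lambda>m. X n - X m) \<longlonglongrightarrow> X n - x" by (intro tendsto_diff tendsto_const lim)
      show "eventually (\<lambda>m. env t (X n - X m) \<le> e^2) sequentially"
        unfolding eventually_sequentially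
      proof (intro exI[of _ N] allI impI)
        fix m assume m: "m \<ge> N"
        have d: "X n - X m \<in> Dt t" using XD quadf.Ediff[OF QE] by blast
        have "env t (X n - X m) = qf ?F (X n - X m)" using envform_qf[OF d] by simp
        also have "\<dots> \<le> (tnorm ?F (X n - X m))^2" by (rule qf_le_tnorm[OF PF v])
        also have "\<dots> \<le> e^2" using N n m tnorm_nonneg[OF PF v] by (intro power_mono) (auto intro: less_imp_le)
        finally show "env t (X n - X m) \<le> e^2" .
      qed
    qed
    then show ?thesis by blast
  qed
  obtain N1 where N1: "\<forall>n\<ge>N1. X n - x \<in> Dt t \<and> env t (X n - x) \<le> 1^2" using key[of 1] by auto
  have xD: "x \<in> Dt t"
  proof -
    have "X N1 - (X N1 - x) \<in> Dt t" using N1 XD quadf.Ediff[OF QE] by blast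
    then show ?thesis by simp
  qed
  define c where "c = 1 + m_f ?F"
  have c: "c \<ge> 1" using m_f_nonneg[OF PF v] by (simp add: c_def)
  have "(\<lambda>n. tnorm ?F (X n - x)) \<longlonglongrightarrow> 0"
  proof (rule LIMSEQ_I)
    fix r :: real assume r: "r > 0"
    obtain N2 where N2: "\<forall>n\<ge>N2. X n - x \<in> Dt t \<and> env t (X n - x) \<le> (r/2)^2" using key[of "r/2"] r by auto
    have "eventually (\<lambda>n. dist (X n) x < r / (2 * c)) sequentially"
      using tendstoD[OF lim, of "r / (2 * c)"] r c by simp
    then obtain N3 where N3: "\<forall>n\<ge>N3. norm (X n - x) < r / (2 * c)"
      by (auto simp: eventually_sequentially dist_norm)
    show "\<exists>no. \<forall>n\<ge>no. norm (tnorm ?F (X n - x) - 0) < r"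
    proof (intro exI[of _ "max N2 N3"] allI impI)
      fix n assume n: "n \<ge> max N2 N3"
      have d: "X n - x \<in> Dt t" "env t (X n - x) \<le> (r/2)^2" using N2 n by auto
      have nn: "norm (X n - x) < r / (2 * c)" using N3 n by auto
      have "c * (norm (X n - x))^2 \<le> c * (r / (2 * c))^2"
        using nn c by (intro mult_left_mono power_mono) auto
      also have "\<dots> = (r/2)^2 / c" using c by (simp add: field_simps power2_eq_square)
      also have "\<dots> \<le> (r/2)^2 / 1" by (rule divide_left_mono) (use c in auto)
      finally have a: "c * (norm (X n - x))^2 \<le> (r/2)^2" by simp
      have "(tnorm ?F (X n - x))^2 = env t (X n - x) + c * (norm (X n - x))^2"
        unfolding tnorm_sq[OF PF v] c_def using envform_qf[OF d(1)] by simp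
      also have "\<dots> \<le> 2 * (r/2)^2" using a d(2) by simp
      also have "\<dots> < r^2" using r by (simp add: power2_eq_square)
      finally have "(tnorm ?F (X n - x))^2 < r^2" .
      then have "tnorm ?F (X n - x) < r" using r tnorm_nonneg[OF PF v] by (simp add: power_less_imp_less_base)
      then show "norm (tnorm ?F (X n - x) - 0) < r" using tnorm_nonneg[OF PF v] by simp
    qed
  qed
  then show "\<exists>x\<in>dom_f ?F. (\<lambda>n. tnorm ?F (X n - x)) \<longlonglongrightarrow> 0"
    using xD envform_dom by auto
qed

definition rpart :: "'h form" where
  "rpart = restr (envform t) (dom_f t)"

lemma rpart_props:
  "positive_f rpart" "closable_f rpart" "dom_f rpart = dom_f t"
  "\<And>x. x \<in> dom_f t \<Longrightarrow> qf rpart x = env t x"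
proof -
  have sub: "dom_f t \<subseteq> dom_f (envform t)" using dom_sub_Dt[OF P] envform_dom by auto
  show "positive_f rpart" unfolding rpart_def
    by (rule positive_restr[OF envform_pos is_formD(1)[OF pos_form[OF P]] sub dense_dom[OF P]])
  show "closable_f rpart" unfolding closable_f_def rpart_def
    using envform_closed extends_restr[OF sub] by blast
  show "dom_f rpart = dom_f t" by (simp add: rpart_def restr_simps)
  show "qf rpart x = env t x" if "x \<in> dom_f t" for x
    using that qf_restr[OF that] envform_qf dom_sub_Dt[OF P] by (simp add: rpart_def)
qed

end


section \<open>Closed forms are lower semicontinuous\<close>

inductive_set mh :: "(nat \<Rightarrow> 'a::real_vector) \<Rightarrow> nat \<Rightarrow> 'a set" for z :: "nat \<Rightarrow> 'a" and n :: nat where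
  base: "k \<ge> n \<Longrightarrow> z k \<in> mh z n"
| mid: "u \<in> mh z n \<Longrightarrow> w \<in> mh z n \<Longrightarrow> scaleR (1/2) (u + w) \<in> mh z n"

lemma mh_mono: "m \<ge> n \<Longrightarrow> w \<in> mh z m \<Longrightarrow> w \<in> mh z n"
proof -
  assume mn: "m \<ge> n"
  show "w \<in> mh z m \<Longrightarrow> w \<in> mh z n"
    by (induction rule: mh.induct) (use mn in \<open>auto intro: mh.intros\<close>)
qed

lemma mh_dom: "csubspace D \<Longrightarrow> (\<And>k. z k \<in> D) \<Longrightarrow> w \<in> mh z n \<Longrightarrow> w \<in> D"
proof -
  assume D: "csubspace D" and zD: "\<And>k. z k \<in> D"
  show "w \<in> mh z n \<Longrightarrow> w \<in> D"
    by (induction rule: mh.induct) (auto intro: zD csubspace_scaleR[OF D] csubspace_add[OF D])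
qed

lemma mh_close:
  fixes z :: "nat \<Rightarrow> 'a::real_normed_vector"
  assumes close: "\<And>k. k \<ge> n \<Longrightarrow> norm (z k - x) \<le> e"
  shows "w \<in> mh z n \<Longrightarrow> norm (w - x) \<le> e"
proof (induction rule: mh.induct)
  case (base k) then show ?case using close by simp
next
  case (mid u w)
  have "scaleR (1/2) (u + w) - x = scaleR (1/2) ((u - x) + (w - x))"
    by (simp add: algebra_simps flip: scaleR_add_left)
  then have "norm (scaleR (1/2) (u + w) - x) = (1/2) * norm ((u - x) + (w - x))" by simp
  also have "\<dots> \<le> (1/2) * (norm (u - x) + norm (w - x))"
    by (intro mult_left_mono norm_triangle_ineq) auto
  also have "\<dots> \<le> e" using mid by simp
  finally show ?case .
qed

lemma closed_bound:
  fixes s :: "'h::chilbert form" and v :: 'h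
  assumes C: "closed_f s" and v: "v \<noteq> 0" and zD: "\<And>n. z n \<in> dom_f s" and lim: "z \<longlonglongrightarrow> x"
    and M: "\<And>n. qf s (z n) \<le> M"
  shows "x \<in> dom_f s \<and> qf s x \<le> M"
proof -
  have P: "positive_f s" using C by (simp add: closed_f_def)
  have F: "is_form s" by (rule pos_form[OF P])
  have Dsub: "csubspace (dom_f s)" by (rule is_formD(1)[OF F])
  define p where "p u = qf s u + (norm u)^2" for u
  have p_nonneg: "0 \<le> p u" for u unfolding p_def using qf_nonneg[OF P, of u] by simp
  have p_par: "p (u + w) + p (u - w) = 2 * p u + 2 * p w" if "u \<in> dom_f s" "w \<in> dom_f s" for u w
    unfolding p_def using qf_parallelogram[OF P that] norm_parallelogram[of u w] by simp
  have p_half: "p (scaleR (1/2) u) = p u / 4" for u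
    unfolding p_def by (simp add: qf_scaleR[OF P] power2_eq_square field_simps)
  have p_sym: "p (u - w) = p (w - u)" for u w
    unfolding p_def using qf_minus[OF P, of "u - w"] by (simp add: norm_minus_commute)
  have wD: "w \<in> mh z n \<Longrightarrow> w \<in> dom_f s" for w n by (rule mh_dom[OF Dsub zD])
  define d where "d n = Inf (p ` mh z n)" for n
  have ne: "p ` mh z n \<noteq> {}" for n using mh.base[of n n z] by blast
  have bb: "bdd_below (p ` mh z n)" for n using p_nonneg by (auto intro!: bdd_belowI[of _ 0])
  have d_le: "w \<in> mh z n \<Longrightarrow> d n \<le> p w" for w n
    unfolding d_def by (rule cInf_lower[OF _ bb]) blast
  have d_ge: "(\<And>w. w \<in> mh z n \<Longrightarrow> a \<le> p w) \<Longrightarrow> a \<le> d n" for a n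
    unfolding d_def by (rule cInf_greatest[OF ne]) blast
  have d_mono: "incseq d"
  proof (rule incseq_SucI)
    fix n show "d n \<le> d (Suc n)"
      by (rule d_ge) (rule d_le, rule mh_mono[of n "Suc n"], auto)
  qed
  obtain K where K: "\<And>n. norm (z n) \<le> K"
    using convergent_imp_Bseq[of z] lim by (auto simp: Bseq_def convergent_def)
  have d_bdd: "d n \<le> M + K^2" for n
  proof -
    have "d n \<le> p (z n)" by (rule d_le) (rule mh.base, simp)
    also have "\<dots> \<le> M + K^2" unfolding p_def using M[of n] K[of n] norm_ge_zero[of "z n"]
      by (intro add_mono power_mono) auto
    finally show ?thesis .
  qed
  define L where "L = (SUP n. d n)"
  have dL: "d \<longlonglongrightarrow> L" unfolding L_def
    by (rule LIMSEQ_incseq_SUP[OF _ d_mono]) (use d_bdd in \<open>auto intro!: bdd_aboveI\<close>)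
  have d_leL: "d n \<le> L" for n by (rule incseq_le[OF d_mono dL])
  have "\<forall>n. \<exists>u. u \<in> mh z n \<and> p u < d n + 1 / real (Suc n)"
  proof
    fix n
    have "Inf (p ` mh z n) < d n + 1 / real (Suc n)" by (simp add: d_def)
    then obtain y where "y \<in> p ` mh z n" "y < d n + 1 / real (Suc n)" using cInf_lessD[OF ne] by blast
    then show "\<exists>u. u \<in> mh z n \<and> p u < d n + 1 / real (Suc n)" by blast
  qed
  then obtain w where w: "\<And>n. w n \<in> mh z n" "\<And>n. p (w n) < d n + 1 / real (Suc n)"
    by metis
  have wDn: "w n \<in> dom_f s" for n by (rule wD[OF w(1)])
  have est: "p (w n - w m) \<le> 2 * (L - d n) + 4 / real (Suc n)" if mn: "m \<ge> n" for m n
  proof -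
    have wm: "w m \<in> mh z n" by (rule mh_mono[OF mn w(1)])
    have "d n \<le> p (scaleR (1/2) (w n + w m))" by (rule d_le) (rule mh.mid[OF w(1) wm])
    then have a: "4 * d n \<le> p (w n + w m)" by (simp add: p_half)
    have "p (w n - w m) = 2 * p (w n) + 2 * p (w m) - p (w n + w m)"
      using p_par[OF wDn[of n] wDn[of m]] by simp
    also have "\<dots> \<le> 2 * (d n + 1 / real (Suc n)) + 2 * (d m + 1 / real (Suc m)) - 4 * d n"
      using w(2)[of n] w(2)[of m] a by simp
    also have "\<dots> \<le> 2 * (L - d n) + 4 / real (Suc n)"
    proof -
      have "1 / real (Suc m) \<le> 1 / real (Suc n)" using mn by (simp add: frac_le)
      then show ?thesis using d_leL[of m] by simp
    qed
    finally show ?thesis .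
  qed
  define c where "c = 1 + m_f s"
  have c: "c \<ge> 1" using m_f_nonneg[OF P v] by (simp add: c_def)
  have tn_p: "(tnorm s u)^2 \<le> c * p u" for u
  proof -
    have "(tnorm s u)^2 = qf s u + c * (norm u)^2" unfolding tnorm_sq[OF P v] c_def ..
    also have "\<dots> \<le> c * qf s u + c * (norm u)^2"
      using c qf_nonneg[OF P, of u] by (intro add_right_mono) (simp add: mult_le_cancel_right1)
    finally show ?thesis by (simp add: p_def distrib_left)
  qed
  have inv: "(\<lambda>N. 1 / real (Suc N)) \<longlonglongrightarrow> 0"
    using LIMSEQ_inverse_real_of_nat by (simp add: inverse_eq_divide)
  have inv4: "(\<lambda>N. 4 / real (Suc N)) \<longlonglongrightarrow> 0"
    using tendsto_mult[OF tendsto_const inv, of 4] by simp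
  have g0: "(\<lambda>N. c * (2 * (L - d N) + 4 / real (Suc N))) \<longlonglongrightarrow> c * (2 * (L - L) + 0)"
    by (intro tendsto_intros dL inv4)
  have cauchy: "\<forall>e>0. \<exists>N. \<forall>m\<ge>N. \<forall>n\<ge>N. tnorm s (w m - w n) < e"
  proof (intro allI impI)
    fix e :: real assume e: "e > 0"
    have "eventually (\<lambda>N. c * (2 * (L - d N) + 4 / real (Suc N)) < e^2) sequentially"
      using order_tendstoD(2)[OF g0, of "e^2"] e by simp
    then obtain N where N: "c * (2 * (L - d N) + 4 / real (Suc N)) < e^2"
      by (auto simp: eventually_sequentially)
    show "\<exists>N. \<forall>m\<ge>N. \<forall>n\<ge>N. tnorm s (w m - w n) < e"
    proof (intro exI[of _ N] allI impI)
      fix m n assume m: "m \<ge> N" and n: "n \<ge> N"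
      define k where "k = min m n"
      have kN: "k \<ge> N" using m n by (simp add: k_def)
      have "p (w m - w n) \<le> 2 * (L - d k) + 4 / real (Suc k)"
      proof (cases "m \<le> n")
        case True then show ?thesis using est[of m n] p_sym by (simp add: k_def)
      next
        case False then show ?thesis using est[of n m] p_sym[of "w m" "w n"] by (simp add: k_def)
      qed
      also have "\<dots> \<le> 2 * (L - d N) + 4 / real (Suc N)"
      proof -
        have "d N \<le> d k" using d_mono kN by (simp add: incseq_def)
        moreover have "4 / real (Suc k) \<le> 4 / real (Suc N)" using kN by (simp add: frac_le)
        ultimately show ?thesis by simp
      qed
      finally have "c * p (w m - w n) \<le> c * (2 * (L - d N) + 4 / real (Suc N))"
        using c by (intro mult_left_mono) auto
      then have "(tnorm s (w m - w n))^2 < e^2" using tn_p[of "w m - w n"] N by simp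
      then show "tnorm s (w m - w n) < e" using e tnorm_nonneg[OF P v] by (simp add: power_less_imp_less_base)
    qed
  qed
  then obtain y where yD: "y \<in> dom_f s" and ty: "(\<lambda>n. tnorm s (w n - y)) \<longlonglongrightarrow> 0"
    using C wDn unfolding closed_f_def by blast
  have "(\<lambda>n. w n - y) \<longlonglongrightarrow> 0"
    by (rule Lim_null_comparison[OF _ ty]) (simp add: norm_le_tnorm[OF P v])
  then have wy: "w \<longlonglongrightarrow> y" using tendsto_add[of "\<lambda>n. w n - y" 0 sequentially "\<lambda>n. y" y] by simp
  have wx: "w \<longlonglongrightarrow> x"
  proof (rule LIMSEQ_I)
    fix r :: real assume r: "r > 0"
    have "eventually (\<lambda>k. dist (z k) x < r/2) sequentially" using tendstoD[OF lim, of "r/2"] r by simp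
    then obtain N where N0: "\<And>k. k \<ge> N \<Longrightarrow> norm (z k - x) < r/2"
      by (auto simp: eventually_sequentially dist_norm)
    have N: "\<And>k. k \<ge> N \<Longrightarrow> norm (z k - x) \<le> r/2" using N0 less_imp_le by blast
    show "\<exists>no. \<forall>n\<ge>no. norm (w n - x) < r"
    proof (intro exI[of _ N] allI impI)
      fix n assume n: "n \<ge> N"
      have "norm (w n - x) \<le> r/2" by (rule mh_close[OF _ w(1)]) (use N n in auto)
      then show "norm (w n - x) < r" using r by simp
    qed
  qed
  have xy: "x = y" using LIMSEQ_unique[OF wx wy] .
  have xD: "x \<in> dom_f s" using yD xy by simp
  have tx: "(\<lambda>n. tnorm s (w n - x)) \<longlonglongrightarrow> 0" using ty xy by simp
  have sq: "(\<lambda>n. sqrt (qf s (w n))) \<longlonglongrightarrow> sqrt (qf s x)"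
  proof -
    have "(\<lambda>n. sqrt (qf s (w n)) - sqrt (qf s x)) \<longlonglongrightarrow> 0"
    proof (rule Lim_null_comparison[OF _ tx])
      show "eventually (\<lambda>n. norm (sqrt (qf s (w n)) - sqrt (qf s x)) \<le> tnorm s (w n - x)) sequentially"
      proof (rule always_eventually, rule allI)
        fix n
        have "norm (sqrt (qf s (w n)) - sqrt (qf s x)) \<le> sqrt (qf s (w n - x))"
          using qf_sqrt_diff[OF P wDn xD] by simp
        also have "\<dots> \<le> sqrt ((tnorm s (w n - x))^2)" by (rule real_sqrt_le_mono[OF qf_le_tnorm[OF P v]])
        also have "\<dots> = tnorm s (w n - x)" using tnorm_nonneg[OF P v] by simp
        finally show "norm (sqrt (qf s (w n)) - sqrt (qf s x)) \<le> tnorm s (w n - x)" .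
      qed
    qed
    then show ?thesis using tendsto_add[of "\<lambda>n. sqrt (qf s (w n)) - sqrt (qf s x)" 0 sequentially
        "\<lambda>n. sqrt (qf s x)" "sqrt (qf s x)"] by simp
  qed
  have qw: "(\<lambda>n. qf s (w n)) \<longlonglongrightarrow> qf s x"
    using tendsto_power[OF sq, of 2] qf_nonneg[OF P] by simp
  have pw: "(\<lambda>n. p (w n)) \<longlonglongrightarrow> L"
  proof (rule tendsto_sandwich[of d _ _ "\<lambda>n. d n + 1 / real (Suc n)"])
    show "eventually (\<lambda>n. d n \<le> p (w n)) sequentially" using d_le[OF w(1)] by simp
    show "eventually (\<lambda>n. p (w n) \<le> d n + 1 / real (Suc n)) sequentially"
      using w(2) by (simp add: less_imp_le)
    show "d \<longlonglongrightarrow> L" by (rule dL)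
    show "(\<lambda>n. d n + 1 / real (Suc n)) \<longlonglongrightarrow> L"
      using tendsto_add[OF dL inv] by simp
  qed
  have "(\<lambda>n. qf s (w n)) \<longlonglongrightarrow> L - (norm x)^2"
  proof -
    have "(\<lambda>n. p (w n) - (norm (w n))^2) \<longlonglongrightarrow> L - (norm x)^2"
      by (intro tendsto_intros pw wx)
    then show ?thesis by (simp add: p_def)
  qed
  then have qx: "qf s x = L - (norm x)^2" using LIMSEQ_unique[OF qw] by simp
  have dM: "d n \<le> M + (norm x)^2" for n
  proof (rule LIMSEQ_le_const)
    show "(\<lambda>k. M + (norm (z k))^2) \<longlonglongrightarrow> M + (norm x)^2" by (intro tendsto_intros lim)
    show "\<exists>N. \<forall>k\<ge>N. d n \<le> M + (norm (z k))^2"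
    proof (intro exI[of _ n] allI impI)
      fix k assume "k \<ge> n"
      then have "d n \<le> p (z k)" by (intro d_le mh.base)
      also have "\<dots> \<le> M + (norm (z k))^2" using M[of k] by (simp add: p_def)
      finally show "d n \<le> M + (norm (z k))^2" .
    qed
  qed
  have "L \<le> M + (norm x)^2" by (rule LIMSEQ_le_const2[OF dL]) (use dM in auto)
  then show ?thesis using xD qx by simp
qed


section \<open>Closability, lower semicontinuity and the regular part\<close>

definition lscD :: "'h::chilbert form \<Rightarrow> bool" where
  "lscD t \<longleftrightarrow> (\<forall>x\<in>dom_f t. \<forall>d>0. \<exists>e>0. \<forall>z\<in>dom_f t. dist z x < e \<longrightarrow> qf t x - d \<le> qf t z)"

lemma inv_Suc_lim: "(\<lambda>N. 1 / real (Suc N)) \<longlonglongrightarrow> 0"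
  using LIMSEQ_inverse_real_of_nat by (simp add: inverse_eq_divide)

lemma closable_lscD:
  fixes t :: "'h::chilbert form" and v :: 'h
  assumes P: "positive_f t" and Cl: "closable_f t" and v: "v \<noteq> 0"
  shows "lscD t"
  unfolding lscD_def
proof (intro ballI allI impI)
  fix x d assume x: "x \<in> dom_f t" and d: "(d::real) > 0"
  obtain s where C: "closed_f s" and E: "extends_f s t" using Cl by (auto simp: closable_f_def)
  have sub: "dom_f t \<subseteq> dom_f s" using E by (simp add: extends_f_def)
  have qe: "z \<in> dom_f t \<Longrightarrow> qf s z = qf t z" for z using E by (simp add: extends_f_def qf_def)
  show "\<exists>e>0. \<forall>z\<in>dom_f t. dist z x < e \<longrightarrow> qf t x - d \<le> qf t z"
  proof (rule ccontr)
    assume "\<not> ?thesis"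
    then have h: "\<forall>e>0. \<exists>z\<in>dom_f t. dist z x < e \<and> qf t z < qf t x - d"
      by (auto simp: not_le)
    have "\<forall>n. \<exists>z. z \<in> dom_f t \<and> dist z x < 1 / real (Suc n) \<and> qf t z < qf t x - d"
    proof
      fix n :: nat
      have "1 / real (Suc n) > 0" by simp
      then show "\<exists>z. z \<in> dom_f t \<and> dist z x < 1 / real (Suc n) \<and> qf t z < qf t x - d"
        using h by blast
    qed
    then obtain z where z: "\<And>n. z n \<in> dom_f t" "\<And>n. dist (z n) x < 1 / real (Suc n)"
      "\<And>n. qf t (z n) < qf t x - d" by metis
    have "(\<lambda>n. z n - x) \<longlonglongrightarrow> 0"
      by (rule Lim_null_comparison[OF _ inv_Suc_lim])
         (use z(2) in \<open>auto simp: dist_norm less_imp_le\<close>)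
    then have lim: "z \<longlonglongrightarrow> x" using tendsto_add[of "\<lambda>n. z n - x" 0 sequentially "\<lambda>n. x" x] by simp
    have "x \<in> dom_f s \<and> qf s x \<le> qf t x - d"
    proof (rule closed_bound[OF C v _ lim])
      show "z n \<in> dom_f s" for n using z(1) sub by auto
      show "qf s (z n) \<le> qf t x - d" for n using z(1,3) qe by (simp add: less_imp_le)
    qed
    then show False using qe[OF x] d by simp
  qed
qed

context
  fixes t :: "'h::chilbert form" and v :: 'h
  assumes P: "positive_f t" and v: "v \<noteq> 0"
begin

lemma lscD_env_ge:
  assumes L: "lscD t" and x: "x \<in> dom_f t"
  shows "qf t x \<le> env t x"
proof (rule field_le_epsilon)
  fix d :: real assume d: "d > 0"
  obtain e where e: "e > 0" "\<And>z. z \<in> dom_f t \<Longrightarrow> dist z x < e \<Longrightarrow> qf t x - d \<le> qf t z"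
    using L x d unfolding lscD_def by blast
  have "qf t x - d \<le> env t x"
    by (rule env_ge_lsc[OF P _ e(1)]) (use dom_sub_Dt[OF P x] e(2) in auto)
  then show "qf t x \<le> env t x + d" by simp
qed

lemma rpart_eq_if_lscD:
  assumes L: "lscD t"
  shows "rpart t = t"
proof (rule pos_form_eq[OF rpart_props(1)[OF P v] P rpart_props(3)[OF P v]])
  fix x assume "x \<in> dom_f (rpart t)"
  then have x: "x \<in> dom_f t" using rpart_props(3)[OF P v] by simp
  show "qf (rpart t) x = qf t x"
    using rpart_props(4)[OF P v x] lscD_env_ge[OF L x] dom_sub_Dt[OF P x] by simp
qed

lemma lscD_closable: "lscD t \<Longrightarrow> closable_f t"
  using rpart_eq_if_lscD rpart_props(2)[OF P v] by metis

lemma closable_iff_lscD: "closable_f t \<longleftrightarrow> lscD t"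
  using lscD_closable closable_lscD[OF P _ v] by blast

lemma cand_le_env:
  assumes R: "regular_part_cand t r" and x: "x \<in> dom_f t"
  shows "qf r x \<le> env t x"
proof -
  have Pr: "positive_f r" and Clr: "closable_f r" and dr: "dom_f r = dom_f t"
    and le: "\<And>z. z \<in> dom_f t \<Longrightarrow> qf r z \<le> qf t z"
    using R by (auto simp: regular_part_cand_def qf_def)
  have L: "lscD r" by (rule closable_lscD[OF Pr Clr v])
  show ?thesis
  proof (rule field_le_epsilon)
    fix d :: real assume d: "d > 0"
    obtain e where e: "e > 0" "\<And>z. z \<in> dom_f t \<Longrightarrow> dist z x < e \<Longrightarrow> qf r x - d \<le> qf r z"
      using L x d dr unfolding lscD_def by force
    have "qf r x - d \<le> env t x"
      by (rule env_ge_lsc[OF P _ e(1)]) (use dom_sub_Dt[OF P x] e(2) le order_trans in blast)+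
    then show "qf r x \<le> env t x + d" by simp
  qed
qed

lemma rpart_cand: "regular_part_cand t (rpart t)"
  unfolding regular_part_cand_def
  using rpart_props[OF P v] dom_sub_Dt[OF P] by (auto simp: qf_def[symmetric])

lemma regular_part_eq: "regular_part t = rpart t"
  unfolding regular_part_def
proof (rule the_equality)
  show "regular_part_cand t (rpart t) \<and>
    (\<forall>r'. regular_part_cand t r' \<longrightarrow> (\<forall>x\<in>dom_f t. Re (val_f r' x x) \<le> Re (val_f (rpart t) x x)))"
    using rpart_cand cand_le_env rpart_props(4)[OF P v] by (auto simp: qf_def[symmetric])
next
  fix r assume h: "regular_part_cand t r \<and>
    (\<forall>r'. regular_part_cand t r' \<longrightarrow> (\<forall>x\<in>dom_f t. Re (val_f r' x x) \<le> Re (val_f r x x)))"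
  then have Rr: "regular_part_cand t r" by blast
  have "\<forall>x\<in>dom_f t. Re (val_f (rpart t) x x) \<le> Re (val_f r x x)" using h rpart_cand by blast
  then have mx: "\<And>x. x \<in> dom_f t \<Longrightarrow> qf (rpart t) x \<le> qf r x" by (simp add: qf_def)
  have Pr: "positive_f r" and dr: "dom_f r = dom_f t" using Rr by (auto simp: regular_part_cand_def)
  show "r = rpart t"
  proof (rule pos_form_eq[OF Pr rpart_props(1)[OF P v]])
    show "dom_f r = dom_f (rpart t)" using dr rpart_props(3)[OF P v] by simp
    fix x assume "x \<in> dom_f r"
    then have x: "x \<in> dom_f t" using dr by simp
    show "qf r x = qf (rpart t) x"
      using cand_le_env[OF Rr x] mx[OF x] rpart_props(4)[OF P v x] by simp
  qed
qed

lemma regular_iff_closable: "regular_f t \<longleftrightarrow> closable_f t"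
proof
  assume reg: "regular_f t"
  have "t = rpart t"
  proof (rule form_ext[OF pos_form[OF P] pos_form[OF rpart_props(1)[OF P v]]])
    show "dom_f t = dom_f (rpart t)" using rpart_props(3)[OF P v] by simp
    fix x y assume x: "x \<in> dom_f t" and y: "y \<in> dom_f t"
    have "val_f (singular_part t) x y = 0" using reg x y by (simp add: regular_f_def)
    then show "val_f t x y = val_f (rpart t) x y"
      using x y rpart_props(3)[OF P v]
      by (simp add: singular_part_def regular_part_eq diff_f_def dom_f_def[symmetric] val_f_def[symmetric])
  qed
  then show "closable_f t" using rpart_props(2)[OF P v] by metis
next
  assume "closable_f t"
  then have "rpart t = t" using rpart_eq_if_lscD closable_lscD[OF P _ v] by blast
  then show "regular_f t"
    by (simp add: regular_f_def singular_part_def regular_part_eq diff_f_def)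
qed

end


section \<open>The generalized effect algebra of regular forms\<close>

lemma Vf_pos: "t \<in> Vf \<Longrightarrow> positive_f t" by (simp add: Vf_def)
lemma Vf_bdd: "t \<in> Vf \<Longrightarrow> bounded_f t \<Longrightarrow> dom_f t = UNIV" by (simp add: Vf_def)

lemma Rf_iff:
  fixes t :: "'h::chilbert form" and v :: 'h
  assumes v: "v \<noteq> 0"
  shows "t \<in> Rf \<longleftrightarrow> t \<in> Vf \<and> lscD t"
  unfolding Rf_def using regular_iff_closable[OF _ v] closable_iff_lscD[OF _ v] Vf_pos by blast

lemma bounded_fI: "(\<And>x. x \<in> dom_f t \<Longrightarrow> norm x = 1 \<Longrightarrow> qf t x \<le> B) \<Longrightarrow> bounded_f t"
  unfolding bounded_f_def qf_def by (auto intro!: bdd_aboveI[of _ B])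

lemma bounded_fD: "bounded_f t \<Longrightarrow> \<exists>B. \<forall>x. x \<in> dom_f t \<longrightarrow> norm x = 1 \<longrightarrow> qf t x \<le> B"
  unfolding bounded_f_def qf_def bdd_above_def by blast

lemma oplus_def_iff: "oplus_Vf t s \<noteq> None \<longleftrightarrow> bounded_f t \<or> bounded_f s \<or> dom_f t = dom_f s"
  by (simp add: oplus_Vf_def)

lemma oplus_Some: "oplus_Vf t s = Some u \<longleftrightarrow> (bounded_f t \<or> bounded_f s \<or> dom_f t = dom_f s) \<and> u = add_f t s"
  by (auto simp: oplus_Vf_def)

context
  fixes x y :: "'h::chilbert form"
  assumes x: "x \<in> Vf" and y: "y \<in> Vf" and def: "bounded_f x \<or> bounded_f y \<or> dom_f x = dom_f y"
begin

lemma dom_add_cases: "dom_f x \<inter> dom_f y = dom_f x \<or> dom_f x \<inter> dom_f y = dom_f y"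
  using def Vf_bdd[OF x] Vf_bdd[OF y] by auto

lemma add_dense: "closure (dom_f x \<inter> dom_f y) = UNIV"
  using dom_add_cases dense_dom[OF Vf_pos[OF x]] dense_dom[OF Vf_pos[OF y]] by auto

lemma add_pos: "positive_f (add_f x y)"
  by (rule positive_add_f[OF Vf_pos[OF x] Vf_pos[OF y] add_dense])

lemma bounded_add_iff: "bounded_f (add_f x y) \<longleftrightarrow> bounded_f x \<and> bounded_f y"
proof
  assume b: "bounded_f (add_f x y)"
  obtain B where B: "\<And>z. z \<in> dom_f x \<inter> dom_f y \<Longrightarrow> norm z = 1 \<Longrightarrow> qf x z + qf y z \<le> B"
    using bounded_fD[OF b] by (auto simp: add_f_simps qf_add_f)
  have bx: "qf x z \<le> B" if "z \<in> dom_f x \<inter> dom_f y" "norm z = 1" for z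
    using B[OF that] qf_nonneg[OF Vf_pos[OF y], of z] by simp
  have by': "qf y z \<le> B" if "z \<in> dom_f x \<inter> dom_f y" "norm z = 1" for z
    using B[OF that] qf_nonneg[OF Vf_pos[OF x], of z] by simp
  show "bounded_f x \<and> bounded_f y"
  proof (cases "bounded_f x")
    case True
    then have "dom_f x \<inter> dom_f y = dom_f y" using Vf_bdd[OF x] by simp
    then show ?thesis using True by-( metis bounded_fI by')
  next
    case False
    show ?thesis
    proof (cases "bounded_f y")
      case True
      then have "dom_f x \<inter> dom_f y = dom_f x" using Vf_bdd[OF y] by simp
      then show ?thesis using True by (metis bounded_fI bx)
    next
      case False
      then have "dom_f x = dom_f y" using def \<open>\<not> bounded_f x\<close> by simp
      then show ?thesis by (metis Int_absorb bounded_fI bx by')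
    qed
  qed
next
  assume "bounded_f x \<and> bounded_f y"
  then obtain B1 B2 where B1: "\<And>z. z \<in> dom_f x \<Longrightarrow> norm z = 1 \<Longrightarrow> qf x z \<le> B1"
    and B2: "\<And>z. z \<in> dom_f y \<Longrightarrow> norm z = 1 \<Longrightarrow> qf y z \<le> B2"
    using bounded_fD by meson
  show "bounded_f (add_f x y)"
    by (rule bounded_fI[of _ "B1 + B2"]) (auto simp: add_f_simps qf_add_f intro: add_mono B1 B2)
qed

lemma add_in_Vf: "add_f x y \<in> Vf"
  unfolding Vf_def using add_pos bounded_add_iff Vf_bdd[OF x] Vf_bdd[OF y]
  by (auto simp: add_f_simps)

lemma lscD_add: "lscD x \<Longrightarrow> lscD y \<Longrightarrow> lscD (add_f x y)"
  unfolding lscD_def add_f_simps(1)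
proof (intro ballI allI impI)
  fix z d assume Lx: "\<forall>x'\<in>dom_f x. \<forall>d>0. \<exists>e>0. \<forall>z\<in>dom_f x. dist z x' < e \<longrightarrow> qf x x' - d \<le> qf x z"
    and Ly: "\<forall>x'\<in>dom_f y. \<forall>d>0. \<exists>e>0. \<forall>z\<in>dom_f y. dist z x' < e \<longrightarrow> qf y x' - d \<le> qf y z"
    and z: "z \<in> dom_f x \<inter> dom_f y" and d: "(d::real) > 0"
  obtain e1 where e1: "e1 > 0" "\<And>w. w \<in> dom_f x \<Longrightarrow> dist w z < e1 \<Longrightarrow> qf x z - d/2 \<le> qf x w"
    using Lx z d by (meson IntD1 half_gt_zero)
  obtain e2 where e2: "e2 > 0" "\<And>w. w \<in> dom_f y \<Longrightarrow> dist w z < e2 \<Longrightarrow> qf y z - d/2 \<le> qf y w"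
    using Ly z d by (meson IntD2 half_gt_zero)
  show "\<exists>e>0. \<forall>w\<in>dom_f x \<inter> dom_f y. dist w z < e \<longrightarrow> qf (add_f x y) z - d \<le> qf (add_f x y) w"
  proof (intro exI[of _ "min e1 e2"] conjI ballI impI)
    show "min e1 e2 > 0" using e1 e2 by simp
    fix w assume w: "w \<in> dom_f x \<inter> dom_f y" and dw: "dist w z < min e1 e2"
    have "qf x z - d/2 \<le> qf x w" "qf y z - d/2 \<le> qf y w" using e1 e2 w dw by auto
    then show "qf (add_f x y) z - d \<le> qf (add_f x y) w" using z w by (simp add: qf_add_f)
  qed
qed

end

lemma oplus_comm: "oplus_Vf t s = oplus_Vf s t"
  by (auto simp: oplus_Vf_def add_f_commute)

context
  fixes v :: "'h::chilbert"
  assumes v: "v \<noteq> 0"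
begin

lemma Rf_closed_oplus:
  assumes x: "x \<in> (Rf :: 'h form set)" and y: "y \<in> Rf" and o: "oplus_Vf x y = Some u"
  shows "u \<in> Rf"
proof -
  have xV: "x \<in> Vf" "lscD x" and yV: "y \<in> Vf" "lscD y" using x y Rf_iff[OF v] by auto
  have def: "bounded_f x \<or> bounded_f y \<or> dom_f x = dom_f y" and u: "u = add_f x y"
    using o by (auto simp: oplus_Some)
  show ?thesis unfolding Rf_iff[OF v] u
    using add_in_Vf[OF xV(1) yV(1) def] lscD_add[OF xV(1) yV(1) def xV(2) yV(2)] by simp
qed

lemma restrict_eq:
  assumes x: "x \<in> (Rf :: 'h form set)" and y: "y \<in> Rf"
  shows "restrict_op Rf oplus_Vf x y = oplus_Vf x y"
  using Rf_closed_oplus[OF x y] by (cases "oplus_Vf x y") (auto simp: restrict_op_def)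

lemma zero_in_Rf: "zero_f \<in> (Rf :: 'h form set)"
  unfolding Rf_iff[OF v] by (simp add: zero_in_Vf lscD_def)

lemma Rf_Vf: "t \<in> (Rf :: 'h form set) \<Longrightarrow> t \<in> Vf" by (simp add: Rf_def)

end

lemma add_zero_right:
  assumes F: "is_form x"
  shows "add_f x zero_f = x"
proof -
  have "(\<lambda>a b. if a \<in> dom_f x \<inter> dom_f zero_f \<and> b \<in> dom_f x \<inter> dom_f zero_f
           then val_f x a b + val_f zero_f a b else 0) = val_f x"
    by (intro ext) (auto simp: fval_out[OF F])
  then show ?thesis unfolding add_f_def using form_pair[of x] by simp
qed


context
  fixes s :: "'h::chilbert form"
  assumes P: "positive_f s" and B: "bounded_f s" and U: "dom_f s = UNIV"
begin

lemma bounded_qf_le: "\<exists>C\<ge>0. \<forall>z. qf s z \<le> C * (norm z)^2"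
proof -
  obtain B0 where B0: "\<And>x. x \<in> dom_f s \<Longrightarrow> norm x = 1 \<Longrightarrow> qf s x \<le> B0" using bounded_fD[OF B] by blast
  define C where "C = max B0 0"
  have "qf s z \<le> C * (norm z)^2" for z
  proof (cases "z = 0")
    case True then show ?thesis using qf_zero[OF P] by simp
  next
    case False
    define u where "u = hscale (complex_of_real (1 / norm z)) z"
    have nu: "norm u = 1" using False by (simp add: u_def norm_hscale norm_divide)
    have "qf s u = qf s z / (norm z)^2" using False
      by (simp add: u_def qf_hscale[OF P] norm_divide power_divide)
    moreover have "qf s u \<le> C" using B0[of u] U nu by (simp add: C_def)
    ultimately show ?thesis using False by (simp add: divide_le_eq mult.commute)
  qed
  moreover have "C \<ge> 0" by (simp add: C_def)
  ultimately show ?thesis by blast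
qed

lemma bounded_val_le: "\<exists>C\<ge>0. \<forall>a b. cmod (val_f s a b) \<le> C * norm a * norm b"
proof -
  obtain C where C: "C \<ge> 0" "\<And>z. qf s z \<le> C * (norm z)^2" using bounded_qf_le by blast
  have "cmod (val_f s a b) \<le> C * norm a * norm b" for a b
  proof -
    have "(cmod (val_f s a b))^2 \<le> qf s a * qf s b" using pos_CS[OF P] U by simp
    also have "\<dots> \<le> (C * (norm a)^2) * (C * (norm b)^2)"
      using C qf_nonneg[OF P] by (intro mult_mono) auto
    also have "\<dots> = (C * norm a * norm b)^2" by (simp add: power2_eq_square)
    finally show ?thesis by (rule power2_le_imp_le) (use C in simp)
  qed
  then show ?thesis using C by blast
qed

lemma bounded_val_tendsto:
  assumes a: "A \<longlonglongrightarrow> a" and b: "Bs \<longlonglongrightarrow> b"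
  shows "(\<lambda>n. val_f s (A n) (Bs n)) \<longlonglongrightarrow> val_f s a b"
proof -
  have F: "is_form s" by (rule pos_form[OF P])
  obtain C where C: "C \<ge> 0" "\<And>a b. cmod (val_f s a b) \<le> C * norm a * norm b" using bounded_val_le by blast
  have eq: "val_f s (A n) (Bs n) - val_f s a b = val_f s (A n - a) b + val_f s (A n) (Bs n - b)" for n
    using U by (simp add: fval_diff_left[OF F] fval_diff_right[OF F])
  have g: "(\<lambda>n. C * norm (A n - a) * norm b + C * norm (A n) * norm (Bs n - b)) \<longlonglongrightarrow>
      C * 0 * norm b + C * norm a * 0"
    by (intro tendsto_intros a b tendsto_norm_zero LIM_zero)
  have "(\<lambda>n. val_f s (A n) (Bs n) - val_f s a b) \<longlonglongrightarrow> 0"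
  proof (rule Lim_null_comparison[OF _ g[simplified]])
    show "eventually (\<lambda>n. norm (val_f s (A n) (Bs n) - val_f s a b)
      \<le> C * norm (A n - a) * norm b + C * norm (A n) * norm (Bs n - b)) sequentially"
    proof (rule always_eventually, rule allI)
      fix n
      have "norm (val_f s (A n) (Bs n) - val_f s a b) \<le> cmod (val_f s (A n - a) b) + cmod (val_f s (A n) (Bs n - b))"
        unfolding eq by (rule norm_triangle_ineq)
      also have "\<dots> \<le> C * norm (A n - a) * norm b + C * norm (A n) * norm (Bs n - b)"
        by (intro add_mono C(2))
      finally show "norm (val_f s (A n) (Bs n) - val_f s a b)
        \<le> C * norm (A n - a) * norm b + C * norm (A n) * norm (Bs n - b)" .
    qed
  qed
  then show ?thesis by (rule LIM_zero_cancel)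
qed

end

lemma bounded_eq_on_dense:
  assumes Py: "positive_f y" "bounded_f y" "dom_f y = UNIV"
    and Py': "positive_f y'" "bounded_f y'" "dom_f y' = UNIV"
    and D: "closure D = UNIV" and eq: "\<And>a b. a \<in> D \<Longrightarrow> b \<in> D \<Longrightarrow> val_f y a b = val_f y' a b"
  shows "y = y'"
proof (rule form_ext[OF pos_form[OF Py(1)] pos_form[OF Py'(1)]])
  show "dom_f y = dom_f y'" using Py Py' by simp
  fix a b
  have "a \<in> closure D" "b \<in> closure D" using D by auto
  then obtain A Bs where A: "\<And>n. A n \<in> D" "A \<longlonglongrightarrow> a" and Bs: "\<And>n. Bs n \<in> D" "Bs \<longlonglongrightarrow> b"
    unfolding closure_sequential by metis
  have l1: "(\<lambda>n. val_f y (A n) (Bs n)) \<longlonglongrightarrow> val_f y a b" by (rule bounded_val_tendsto[OF Py A(2) Bs(2)])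
  have l2: "(\<lambda>n. val_f y (A n) (Bs n)) \<longlonglongrightarrow> val_f y' a b"
    using bounded_val_tendsto[OF Py' A(2) Bs(2)] eq[OF A(1) Bs(1)] by simp
  show "val_f y a b = val_f y' a b" using LIMSEQ_unique[OF l1 l2] .
qed

lemma add_f_eqD:
  assumes "add_f x y = add_f x y'"
  shows "dom_f x \<inter> dom_f y = dom_f x \<inter> dom_f y'"
    "\<And>a b. a \<in> dom_f x \<inter> dom_f y \<Longrightarrow> b \<in> dom_f x \<inter> dom_f y \<Longrightarrow> val_f y a b = val_f y' a b"
proof -
  show d: "dom_f x \<inter> dom_f y = dom_f x \<inter> dom_f y'" using arg_cong[OF assms, of dom_f] by (simp add: add_f_simps)
  fix a b assume a: "a \<in> dom_f x \<inter> dom_f y" and b: "b \<in> dom_f x \<inter> dom_f y"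
  have "val_f (add_f x y) a b = val_f (add_f x y') a b" using assms by simp
  then show "val_f y a b = val_f y' a b" using a b d by (simp add: add_f_simps)
qed

lemma cancel_Vf:
  assumes x: "x \<in> Vf" and y: "y \<in> Vf" and y': "y' \<in> Vf"
    and d1: "bounded_f x \<or> bounded_f y \<or> dom_f x = dom_f y"
    and d2: "bounded_f x \<or> bounded_f y' \<or> dom_f x = dom_f y'"
    and eq: "add_f x y = add_f x y'"
  shows "y = y'"
proof -
  have Py: "positive_f y" and Py': "positive_f y'" using Vf_pos[OF y] Vf_pos[OF y'] by auto
  note dI = add_f_eqD(1)[OF eq] and vI = add_f_eqD(2)[OF eq]
  have same_dom: "y = y'" if "dom_f y = dom_f y'" "dom_f x \<inter> dom_f y = dom_f y"
    using that dI vI by (intro form_ext[OF pos_form[OF Py] pos_form[OF Py']]) auto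
  have qI: "qf y z = qf y' z" if "z \<in> dom_f x \<inter> dom_f y" for z using vI[OF that that] by (simp add: qf_def)
  have Dxd: "closure (dom_f x) = UNIV" by (rule dense_dom[OF Vf_pos[OF x]])
  show ?thesis
  proof (cases "bounded_f x")
    case True
    then have "dom_f x = UNIV" by (rule Vf_bdd[OF x])
    then show ?thesis using dI by (intro same_dom) auto
  next
    case nbx: False
    show ?thesis
    proof (cases "dom_f x = dom_f y \<and> dom_f x = dom_f y'")
      case True then show ?thesis by (intro same_dom) auto
    next
      case False
      have both: "bounded_f y \<and> bounded_f y'"
      proof (cases "bounded_f y")
        case hby: True
        then have Dy: "dom_f y = UNIV" by (rule Vf_bdd[OF y])
        show ?thesis
        proof (cases "bounded_f y'")
          case False
          then have Dy': "dom_f y' = dom_f x" using d2 nbx by simp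
          obtain B where B: "\<And>z. z \<in> dom_f y \<Longrightarrow> norm z = 1 \<Longrightarrow> qf y z \<le> B" using bounded_fD[OF hby] by blast
          have "bounded_f y'"
          proof (rule bounded_fI[of _ B])
            fix z assume z: "z \<in> dom_f y'" "norm z = 1"
            then have "qf y' z = qf y z" using qI[of z] Dy Dy' by simp
            then show "qf y' z \<le> B" using B[of z] z Dy by simp
          qed
          then show ?thesis using hby by simp
        qed (use hby in simp)
      next
        case nby: False
        then have Dxy: "dom_f x = dom_f y" using d1 nbx by simp
        then have by': "bounded_f y'" using False d2 nbx by auto
        then have Dy': "dom_f y' = UNIV" by (rule Vf_bdd[OF y'])
        obtain B where B: "\<And>z. z \<in> dom_f y' \<Longrightarrow> norm z = 1 \<Longrightarrow> qf y' z \<le> B" using bounded_fD[OF by'] by blast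
        have "bounded_f y"
        proof (rule bounded_fI[of _ B])
          fix z assume z: "z \<in> dom_f y" "norm z = 1"
          then have "qf y z = qf y' z" using qI[of z] Dxy by simp
          then show "qf y z \<le> B" using B[of z] z Dy' by simp
        qed
        then show ?thesis using nby by simp
      qed
      then have Dy: "dom_f y = UNIV" and Dy': "dom_f y' = UNIV" using Vf_bdd[OF y] Vf_bdd[OF y'] by auto
      show ?thesis
        by (rule bounded_eq_on_dense[OF Py _ Dy Py' _ Dy' Dxd]) (use both vI Dy in auto)
    qed
  qed
qed


definition dd :: "'h::chilbert form \<Rightarrow> 'h form \<Rightarrow> bool" where
  "dd t s \<longleftrightarrow> bounded_f t \<or> bounded_f s \<or> dom_f t = dom_f s"

lemma dd_assoc:
  assumes "p1 \<Longrightarrow> Dx = UNIV" "p2 \<Longrightarrow> Dy = UNIV" "p3 \<Longrightarrow> Dw = UNIV"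
  shows "((p1 \<or> p2 \<or> Dx = Dy) \<and> ((p1 \<and> p2) \<or> p3 \<or> Dx \<inter> Dy = Dw)) \<longleftrightarrow>
         ((p2 \<or> p3 \<or> Dy = Dw) \<and> (p1 \<or> (p2 \<and> p3) \<or> Dx = Dy \<inter> Dw))"
  using assms by (cases p1; cases p2; cases p3) auto

context
  fixes v :: "'h::chilbert"
  assumes v: "v \<noteq> 0"
begin

lemma op_eq:
  assumes x: "x \<in> (Rf :: 'h form set)" and y: "y \<in> Rf"
  shows "restrict_op Rf oplus_Vf x y = (if dd x y then Some (add_f x y) else None)"
  using restrict_eq[OF v x y] by (simp add: oplus_Vf_def dd_def)

lemma gea_Rf: "gen_effect_algebra (Rf :: 'h form set) (restrict_op Rf oplus_Vf) zero_f"
  unfolding gen_effect_algebra_def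
proof (intro conjI ballI allI impI)
  note zR = zero_in_Rf[OF v]
  show "zero_f \<in> (Rf :: 'h form set)" by (rule zR)
  show "w \<in> Rf" if "restrict_op Rf oplus_Vf x y = Some w" for x y w :: "'h form"
    using that by (auto simp: restrict_op_def split: option.splits if_splits)
  show "restrict_op Rf oplus_Vf x y = restrict_op Rf oplus_Vf y x" if "x \<in> Rf" "y \<in> Rf" for x y :: "'h form"
    using that by (simp add: op_eq dd_def add_f_commute conj_ac disj_ac eq_commute[of "dom_f x"])
  show "restrict_op Rf oplus_Vf x zero_f = Some x" if "x \<in> Rf" for x :: "'h form"
    using that zR by (simp add: op_eq dd_def bounded_zero_f add_zero_right pos_form Vf_pos Rf_Vf[OF v])
next
  fix x y w :: "'h form" assume x: "x \<in> Rf" and y: "y \<in> Rf" and w: "w \<in> Rf"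
  have xV: "x \<in> Vf" and yV: "y \<in> Vf" and wV: "w \<in> Vf" using x y w Rf_Vf[OF v] by auto
  have L: "Option.bind (restrict_op Rf oplus_Vf x y) (\<lambda>u. restrict_op Rf oplus_Vf u w)
      = (if dd x y \<and> dd (add_f x y) w then Some (add_f (add_f x y) w) else None)"
  proof (cases "dd x y")
    case True
    have xy: "add_f x y \<in> Rf" using Rf_closed_oplus[OF v x y] True by (simp add: oplus_Vf_def dd_def)
    show ?thesis using True by (simp add: op_eq[OF x y] op_eq[OF xy w])
  qed (simp add: op_eq[OF x y])
  have R: "Option.bind (restrict_op Rf oplus_Vf y w) (\<lambda>u. restrict_op Rf oplus_Vf x u)
      = (if dd y w \<and> dd x (add_f y w) then Some (add_f x (add_f y w)) else None)"
  proof (cases "dd y w")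
    case True
    have yw: "add_f y w \<in> Rf" using Rf_closed_oplus[OF v y w] True by (simp add: oplus_Vf_def dd_def)
    show ?thesis using True by (simp add: op_eq[OF y w] op_eq[OF x yw])
  qed (simp add: op_eq[OF y w])
  have c: "(dd x y \<and> dd (add_f x y) w) \<longleftrightarrow> (dd y w \<and> dd x (add_f y w))"
  proof -
    have b1: "dd x y \<Longrightarrow> bounded_f (add_f x y) \<longleftrightarrow> bounded_f x \<and> bounded_f y"
      using bounded_add_iff[OF xV yV] by (simp add: dd_def)
    have b2: "dd y w \<Longrightarrow> bounded_f (add_f y w) \<longleftrightarrow> bounded_f y \<and> bounded_f w"
      using bounded_add_iff[OF yV wV] by (simp add: dd_def)
    have "((bounded_f x \<or> bounded_f y \<or> dom_f x = dom_f y) \<and>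
           ((bounded_f x \<and> bounded_f y) \<or> bounded_f w \<or> dom_f x \<inter> dom_f y = dom_f w)) \<longleftrightarrow>
          ((bounded_f y \<or> bounded_f w \<or> dom_f y = dom_f w) \<and>
           (bounded_f x \<or> (bounded_f y \<and> bounded_f w) \<or> dom_f x = dom_f y \<inter> dom_f w))"
      by (rule dd_assoc) (use Vf_bdd[OF xV] Vf_bdd[OF yV] Vf_bdd[OF wV] in auto)
    then show ?thesis using b1 b2 unfolding dd_def add_f_simps(1) by blast
  qed
  show "Option.bind (restrict_op Rf oplus_Vf x y) (\<lambda>u. restrict_op Rf oplus_Vf u w)
      = Option.bind (restrict_op Rf oplus_Vf y w) (\<lambda>u. restrict_op Rf oplus_Vf x u)"
    unfolding L R c by (simp add: add_f_assoc)
next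
  fix x y y' w :: "'h form" assume x: "x \<in> Rf" and y: "y \<in> Rf" and y': "y' \<in> Rf"
    and h: "restrict_op Rf oplus_Vf x y = Some w \<and> restrict_op Rf oplus_Vf x y' = Some w"
  have xV: "x \<in> Vf" and yV: "y \<in> Vf" and y'V: "y' \<in> Vf" using x y y' Rf_Vf[OF v] by auto
  have "dd x y" "dd x y'" "add_f x y = add_f x y'" using h by (auto simp: op_eq[OF x y] op_eq[OF x y'] split: if_splits)
  then show "y = y'" by (intro cancel_Vf[OF xV yV y'V]) (auto simp: dd_def)
next
  fix x y :: "'h form" assume x: "x \<in> Rf" and y: "y \<in> Rf" and h: "restrict_op Rf oplus_Vf x y = Some zero_f"
  have Px: "positive_f x" and Py: "positive_f y" using Vf_pos[OF Rf_Vf[OF v x]] Vf_pos[OF Rf_Vf[OF v y]] by auto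
  have e: "add_f x y = zero_f" using h by (auto simp: op_eq[OF x y] split: if_splits)
  have dI: "dom_f x \<inter> dom_f y = UNIV" using arg_cong[OF e, of dom_f] by (simp add: add_f_simps)
  then have dx: "dom_f x = UNIV" and dy: "dom_f y = UNIV" by auto
  have q: "qf x z + qf y z = 0" for z
    using arg_cong[OF e, of "\<lambda>t. qf t z"] dx dy by (simp add: qf_add_f)
  have qx: "qf x z = 0" and qy: "qf y z = 0" for z using q[of z] qf_nonneg[OF Px, of z] qf_nonneg[OF Py, of z] by auto
  show "x = zero_f"
    using pos_form_eq[OF Px positive_zero_f] dx qx by simp
  show "y = zero_f"
    using pos_form_eq[OF Py positive_zero_f] dy qy by simp
qed

end

lemma nontrivial_of_infdim:
  assumes "infinite_dimensional TYPE('h::chilbert)"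
  shows "\<exists>v::'h. v \<noteq> 0"
proof (rule ccontr)
  assume "\<not> (\<exists>v::'h. v \<noteq> 0)"
  then have "\<forall>x::'h. \<exists>c. x = (\<Sum>s\<in>{}. hscale (c s) s)" by simp
  then show False using assms unfolding infinite_dimensional_def by blast
qed


section \<open>An orthonormal sequence\<close>

definition ON :: "'h::chilbert set \<Rightarrow> bool" where
  "ON S \<longleftrightarrow> (\<forall>e\<in>S. hinner e e = 1) \<and> (\<forall>e\<in>S. \<forall>e'\<in>S. e \<noteq> e' \<longrightarrow> hinner e e' = 0)"

lemma exists_orth:
  assumes inf: "infinite_dimensional TYPE('h::chilbert)" and S: "finite (S :: 'h set)" and on: "ON S"
  shows "\<exists>u. norm u = 1 \<and> (\<forall>e\<in>S. hinner u e = 0)"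
proof -
  obtain x :: 'h where x: "\<not> (\<exists>c. x = (\<Sum>s\<in>S. hscale (c s) s))"
    using inf S unfolding infinite_dimensional_def by blast
  define w where "w = x - (\<Sum>e\<in>S. hscale (hinner x e) e)"
  have wo: "hinner w e0 = 0" if e0: "e0 \<in> S" for e0
  proof -
    have "hinner (\<Sum>e\<in>S. hscale (hinner x e) e) e0 = (\<Sum>e\<in>S. hinner x e * hinner e e0)"
      by (simp add: hinner_sum_left hinner_hscale_left)
    also have "\<dots> = (\<Sum>e\<in>S. if e = e0 then hinner x e else 0)"
      by (rule sum.cong) (use on e0 in \<open>auto simp: ON_def\<close>)
    also have "\<dots> = hinner x e0" using S e0 by simp
    finally show ?thesis by (simp add: w_def hinner_diff_left)
  qed
  have "w \<noteq> 0" using x by (auto simp: w_def)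
  then have nw: "norm w > 0" by simp
  define u where "u = hscale (complex_of_real (1 / norm w)) w"
  have "norm u = 1" using nw by (simp add: u_def norm_hscale norm_divide)
  moreover have "\<forall>e\<in>S. hinner u e = 0" using wo by (simp add: u_def hinner_hscale_left)
  ultimately show ?thesis by blast
qed

definition nxt :: "'h::chilbert list \<Rightarrow> 'h" where
  "nxt l = (SOME u. norm u = 1 \<and> (\<forall>e\<in>set l. hinner u e = 0))"

primrec es :: "nat \<Rightarrow> 'h::chilbert list" where
  "es 0 = []"
| "es (Suc n) = es n @ [nxt (es n)]"

definition eseq :: "nat \<Rightarrow> 'h::chilbert" where
  "eseq n = nxt (es n)"

lemma es_length: "length (es n) = n"
  by (induction n) auto

lemma es_set: "set (es n) = eseq ` {..<n}"
  by (induction n) (auto simp: eseq_def lessThan_Suc)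

lemma hinner_self_norm1: "norm u = 1 \<Longrightarrow> hinner u u = 1"
  by (simp add: hinner_self)

context
  assumes inf: "infinite_dimensional TYPE('h::chilbert)"
begin

lemma es_ON: "ON (set (es n :: 'h list)) \<and> (\<forall>k<n. norm (eseq k :: 'h) = 1 \<and> (\<forall>j<k. hinner (eseq k :: 'h) (eseq j) = 0))"
proof (induction n)
  case 0 then show ?case by (simp add: ON_def)
next
  case (Suc n)
  have ex: "\<exists>u::'h. norm u = 1 \<and> (\<forall>e\<in>set (es n). hinner u e = 0)"
    by (rule exists_orth[OF inf]) (use Suc in auto)
  have u: "norm (eseq n :: 'h) = 1" "\<forall>e\<in>set (es n :: 'h list). hinner (eseq n) e = 0"
    using someI_ex[OF ex] by (simp_all add: eseq_def nxt_def)
  have unot: "eseq n \<notin> set (es n :: 'h list)"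
    using u hinner_self_norm1[OF u(1)] by auto
  have on: "ON (set (es n :: 'h list))" using Suc by simp
  have "ON (set (es (Suc n) :: 'h list))"
    unfolding ON_def
  proof (intro conjI ballI impI)
    fix e assume "e \<in> set (es (Suc n) :: 'h list)"
    then have "e \<in> set (es n) \<or> e = eseq n" by (auto simp: eseq_def)
    then show "hinner e e = 1" using on u(1) by (auto simp: ON_def hinner_self_norm1)
  next
    fix e e' assume "e \<in> set (es (Suc n) :: 'h list)" "e' \<in> set (es (Suc n) :: 'h list)" "e \<noteq> e'"
    then have h: "e \<in> set (es n) \<or> e = eseq n" "e' \<in> set (es n) \<or> e' = eseq n" by (auto simp: eseq_def)
    show "hinner e e' = 0"
      using h on u(2) \<open>e \<noteq> e'\<close> by (auto simp: ON_def hinner_commute[of e "eseq n"])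
  qed
  moreover have "\<forall>k<Suc n. norm (eseq k :: 'h) = 1 \<and> (\<forall>j<k. hinner (eseq k :: 'h) (eseq j) = 0)"
  proof (intro allI impI)
    fix k assume "k < Suc n"
    then have "k < n \<or> k = n" by auto
    then show "norm (eseq k :: 'h) = 1 \<and> (\<forall>j<k. hinner (eseq k :: 'h) (eseq j) = 0)"
    proof
      assume "k < n" then show ?thesis using Suc by simp
    next
      assume k: "k = n"
      show ?thesis using u k es_set[of n] by auto
    qed
  qed
  ultimately show ?case by simp
qed

lemma eseq_orth: "hinner (eseq i :: 'h) (eseq j) = (if i = j then 1 else 0)"
proof -
  have a: "norm (eseq k :: 'h) = 1" "j < k \<Longrightarrow> hinner (eseq k :: 'h) (eseq j) = 0" for k j
    using es_ON[of "Suc k"] by auto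
  show ?thesis
  proof (cases i j rule: linorder_cases)
    case less then show ?thesis using a(2)[of i j] hinner_commute[of "eseq i :: 'h" "eseq j"] by simp
  next
    case equal then show ?thesis using hinner_self_norm1[OF a(1)[of j]] by simp
  next
    case greater then show ?thesis using a(2) by simp
  qed
qed

end


locale ons =
  fixes e :: "nat \<Rightarrow> 'h::chilbert"
  assumes orth: "hinner (e i) (e j) = (if i = j then 1 else 0)"
begin

definition cf :: "nat \<Rightarrow> 'h \<Rightarrow> complex" where "cf n u = hinner u (e n)"
definition fc :: "(nat \<Rightarrow> complex) \<Rightarrow> nat set \<Rightarrow> 'h" where "fc a F = (\<Sum>n\<in>F. hscale (a n) (e n))"

lemma cf_add: "cf n (u + w) = cf n u + cf n w" by (simp add: cf_def hinner_add_left)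
lemma cf_diff: "cf n (u - w) = cf n u - cf n w" by (simp add: cf_def hinner_diff_left)
lemma cf_hscale: "cf n (hscale a u) = a * cf n u" by (simp add: cf_def hinner_hscale_left)
lemma cf_zero[simp]: "cf n 0 = 0" by (simp add: cf_def)
lemma cf_e: "cf k (e n) = (if n = k then 1 else 0)" by (simp add: cf_def orth)

lemma cf_fc: "finite F \<Longrightarrow> cf k (fc a F) = (if k \<in> F then a k else 0)"
proof -
  assume F: "finite F"
  have "cf k (fc a F) = (\<Sum>n\<in>F. a n * (if n = k then 1 else 0))"
    by (simp add: cf_def fc_def hinner_sum_left hinner_hscale_left orth)
  also have "\<dots> = (\<Sum>n\<in>F. if n = k then a k else 0)" by (rule sum.cong) auto
  also have "\<dots> = (if k \<in> F then a k else 0)" using F by simp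
  finally show ?thesis .
qed

lemma hinner_fc_right: "hinner u (fc a F) = (\<Sum>n\<in>F. cnj (a n) * cf n u)"
  by (simp add: fc_def cf_def hinner_sum_right hinner_hscale_right)

lemma norm_fc: "finite F \<Longrightarrow> (norm (fc a F))^2 = (\<Sum>n\<in>F. (cmod (a n))^2)"
proof -
  assume F: "finite F"
  have "(norm (fc a F))^2 = Re (hinner (fc a F) (fc a F))" by (simp add: hinner_self_Re)
  also have "\<dots> = Re (\<Sum>n\<in>F. cnj (a n) * a n)"
    by (simp add: hinner_fc_right cf_fc[OF F] cong: sum.cong)
  also have "\<dots> = (\<Sum>n\<in>F. (cmod (a n))^2)"
  proof -
    have "cnj z * z = complex_of_real ((cmod z)^2)" for z by (metis complex_norm_square mult.commute)
    then show ?thesis by (simp only: Re_sum Re_complex_of_real)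
  qed
  finally show ?thesis .
qed

lemma bessel: "(\<Sum>n<N. (cmod (cf n u))^2) \<le> (norm u)^2"
proof -
  define P where "P = fc (\<lambda>n. cf n u) {..<N}"
  define S where "S = (\<Sum>n<N. (cmod (cf n u))^2)"
  have hu0: "hinner u P = (\<Sum>n<N. cnj (cf n u) * cf n u)" by (simp add: P_def hinner_fc_right)
  have "complex_of_real S = (\<Sum>n<N. complex_of_real ((cmod (cf n u))^2))" by (simp only: S_def of_real_sum)
  also have "\<dots> = (\<Sum>n<N. cf n u * cnj (cf n u))" by (simp only: complex_norm_square)
  finally have hu: "hinner u P = complex_of_real S" using hu0 by (simp add: mult.commute)
  have hP: "hinner P u = complex_of_real S" using hu hinner_commute[of P u] by simp
  have PP: "(norm P)^2 = S" by (simp add: P_def S_def norm_fc)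
  have "0 \<le> (norm (u - P))^2" by simp
  also have "\<dots> = Re (hinner (u - P) (u - P))" by (simp add: hinner_self_Re)
  also have "\<dots> = (norm u)^2 - S - S + S"
    by (simp add: hinner_diff_left hinner_diff_right hu hP hinner_self_Re PP[symmetric])
  finally show ?thesis by (simp add: S_def)
qed

lemma summable_cf2: "summable (\<lambda>n. (cmod (cf n u))^2)"
proof (rule bounded_imp_summable)
  fix N show "(\<Sum>n\<le>N. (cmod (cf n u))^2) \<le> (norm u)^2"
    using bessel[where N="Suc N" and u=u] by (simp add: lessThan_Suc_atMost)
qed simp

lemma summable_fc_series:
  assumes a: "summable (\<lambda>n. (cmod (a n))^2)"
  shows "summable (\<lambda>n. hscale (a n) (e n))"
  unfolding summable_Cauchy
proof (intro allI impI)
  fix r :: real assume r: "r > 0"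
  obtain N where N: "\<forall>m\<ge>N. \<forall>n. norm (\<Sum>k\<in>{m..<n}. (cmod (a k))^2) < r^2"
    using a[unfolded summable_Cauchy] r by (meson zero_less_power)
  show "\<exists>N. \<forall>m\<ge>N. \<forall>n. norm (\<Sum>k\<in>{m..<n}. hscale (a k) (e k)) < r"
  proof (intro exI[of _ N] allI impI)
    fix m n assume m: "m \<ge> N"
    have "(norm (\<Sum>k\<in>{m..<n}. hscale (a k) (e k)))^2 = (\<Sum>k\<in>{m..<n}. (cmod (a k))^2)"
      using norm_fc[of "{m..<n}" a] by (simp add: fc_def)
    also have "\<dots> < r^2" using N m by (simp add: sum_nonneg)
    finally show "norm (\<Sum>k\<in>{m..<n}. hscale (a k) (e k)) < r"
      using r by (simp add: power_less_imp_less_base)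
  qed
qed

lemma cf_suminf:
  assumes a: "summable (\<lambda>n. (cmod (a n))^2)"
  shows "cf k (\<Sum>n. hscale (a n) (e n)) = a k"
proof -
  have "cf k (\<Sum>n. hscale (a n) (e n)) = (\<Sum>n. cf k (hscale (a n) (e n)))"
    unfolding cf_def by (rule bounded_linear.suminf[OF bounded_linear_hinner_left summable_fc_series[OF a]])
  also have "\<dots> = (\<Sum>n. if n = k then a k else 0)"
    by (simp add: cf_hscale cf_e if_distrib cong: if_cong)
  also have "\<dots> = a k" by (subst suminf_finite[of "{k}"]) auto
  finally show ?thesis .
qed

definition Dw :: "'h set" where
  "Dw = {u. summable (\<lambda>n. 4^n * (cmod (cf n u))^2)}"

lemma sq_add_le: "(cmod (a + b))^2 \<le> 2 * (cmod a)^2 + 2 * (cmod b)^2"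
proof -
  have "(cmod (a + b))^2 \<le> (cmod a + cmod b)^2" by (rule power_mono[OF norm_triangle_ineq norm_ge_zero])
  moreover have "0 \<le> (cmod a - cmod b)^2" by simp
  ultimately show ?thesis unfolding power2_diff power2_sum by linarith
qed

lemma Dw_add: assumes x: "x \<in> Dw" and y: "y \<in> Dw" shows "x + y \<in> Dw"
proof -
  have g: "summable (\<lambda>n. 2 * (4^n * (cmod (cf n x))^2) + 2 * (4^n * (cmod (cf n y))^2))"
    using x y unfolding Dw_def by (intro summable_add summable_mult) auto
  have b: "norm (4^n * (cmod (cf n (x + y)))^2) \<le> 2 * (4^n * (cmod (cf n x))^2) + 2 * (4^n * (cmod (cf n y))^2)" for n
  proof -
    have "4^n * (cmod (cf n (x + y)))^2 \<le> 4^n * (2 * (cmod (cf n x))^2 + 2 * (cmod (cf n y))^2)"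
      unfolding cf_add by (intro mult_left_mono sq_add_le) auto
    then show ?thesis by (simp add: algebra_simps)
  qed
  show ?thesis unfolding Dw_def
    by (rule CollectI, rule summable_comparison_test[OF _ g]) (use b in blast)
qed

lemma Dw_hscale: assumes x: "x \<in> Dw" shows "hscale a x \<in> Dw"
proof -
  have "summable (\<lambda>n. (cmod a)^2 * (4^n * (cmod (cf n x))^2))"
    using x by (intro summable_mult) (simp add: Dw_def)
  moreover have "(cmod a)^2 * (4^n * (cmod (cf n x))^2) = 4^n * (cmod (cf n (hscale a x)))^2" for n
    by (simp add: cf_hscale norm_mult power_mult_distrib)
  ultimately show ?thesis by (simp add: Dw_def)
qed

lemma Dw_sub: "csubspace Dw"
  unfolding csubspace_def using Dw_add Dw_hscale by (simp add: Dw_def)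

lemma fc_in_Dw: "finite F \<Longrightarrow> fc a F \<in> Dw"
  unfolding Dw_def by (auto intro!: summable_finite[of F] simp: cf_fc)

lemma e_in_Dw: "e n \<in> Dw"
  unfolding Dw_def by (auto intro!: summable_finite[of "{n}"] simp: cf_e split: if_splits)

lemma Dw_dense: "closure Dw = UNIV"
proof -
  have "u \<in> closure Dw" for u
  proof -
    define P where "P = (\<Sum>n. hscale (cf n u) (e n))"
    have sP: "summable (\<lambda>n. hscale (cf n u) (e n))" by (rule summable_fc_series[OF summable_cf2])
    have cP: "cf k P = cf k u" for k unfolding P_def by (rule cf_suminf[OF summable_cf2])
    define U where "U N = u - P + fc (\<lambda>n. cf n u) {..<N}" for N
    have UD: "U N \<in> Dw" for N
    proof -
      have "cf k (U N) = (if k < N then cf k u else 0)" for k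
        by (simp add: U_def cf_add cf_diff cP cf_fc)
      then show ?thesis unfolding Dw_def by (auto intro!: summable_finite[of "{..<N}"] split: if_splits)
    qed
    have "(\<lambda>N. fc (\<lambda>n. cf n u) {..<N}) \<longlonglongrightarrow> P"
      unfolding fc_def P_def by (rule summable_LIMSEQ[OF sP])
    then have "U \<longlonglongrightarrow> u - P + P" unfolding U_def by (intro tendsto_intros)
    then show ?thesis unfolding closure_sequential using UD by auto
  qed
  then show ?thesis by auto
qed

end


lemma four_pow: "(4::real)^n = 2^n * 2^n" by (simp flip: power_mult_distrib)

lemma amgm4: "(a::real) \<le> 4^n * a^2 + (1/4)^n"
proof -
  define q :: real where "q = 2^n"
  have q: "q > 0" by (simp add: q_def)
  have h1: "(4::real)^n = q * q" by (simp add: q_def four_pow)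
  have h2: "(1/4::real)^n = 1 / (q * q)" by (simp add: h1 power_divide)
  have "0 \<le> (q * a - 1 / q)^2" by simp
  also have "\<dots> = q * q * a^2 - 2 * a + 1 / (q * q)"
    using q by (simp add: power2_eq_square field_simps)
  finally have "2 * a \<le> 4^n * a^2 + (1/4)^n" by (simp add: h1 h2)
  moreover have "0 \<le> 4^n * a^2 + (1/4::real)^n" by simp
  ultimately show ?thesis by linarith
qed

lemma key_nonneg: "0 \<le> 4^n * (cmod c)^2 + 2 * Re (cnj l * c) + (cmod l)^2 * (1/4)^n"
proof -
  define q :: real where "q = 2^n"
  have q: "q > 0" by (simp add: q_def)
  have h1: "(4::real)^n = q * q" by (simp add: q_def four_pow)
  have h2: "(1/4::real)^n = 1 / (q * q)" by (simp add: h1 power_divide)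
  have r: "- (cmod l * cmod c) \<le> Re (cnj l * c)"
    using abs_Re_le_cmod[of "cnj l * c"] by (simp add: norm_mult)
  have "0 \<le> (q * cmod c - cmod l / q)^2" by simp
  also have "\<dots> = q * q * (cmod c)^2 - 2 * (cmod l * cmod c) + (cmod l)^2 * (1 / (q * q))"
    using q by (simp add: power2_eq_square field_simps)
  finally show ?thesis using r by (simp add: h1 h2)
qed

lemma ab_le_sq: "0 \<le> a \<Longrightarrow> 0 \<le> b \<Longrightarrow> (a::real) * b \<le> a^2 + b^2"
proof -
  assume "0 \<le> a" "0 \<le> b"
  moreover have "0 \<le> (a - b)^2" by simp
  moreover have "0 \<le> a * b" using \<open>0 \<le> a\<close> \<open>0 \<le> b\<close> by simp
  ultimately show ?thesis unfolding power2_diff by linarith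
qed

context ons
begin

definition xq :: "'h \<Rightarrow> real" where "xq u = (\<Sum>n. 4^n * (cmod (cf n u))^2)"
definition xv :: "'h \<Rightarrow> 'h \<Rightarrow> complex" where
  "xv u w = (\<Sum>n. complex_of_real (4^n) * (cf n u * cnj (cf n w)))"
definition phi :: "'h \<Rightarrow> complex" where "phi u = (\<Sum>n. cf n u)"
definition Xf :: "'h form" where "Xf = (Dw, \<lambda>u w. if u \<in> Dw \<and> w \<in> Dw then xv u w else 0)"
definition Yf :: "'h form" where "Yf = (Dw, \<lambda>u w. if u \<in> Dw \<and> w \<in> Dw then phi u * cnj (phi w) else 0)"

lemma sq: "u \<in> Dw \<Longrightarrow> summable (\<lambda>n. 4^n * (cmod (cf n u))^2)" by (simp add: Dw_def)

lemma sx: assumes u: "u \<in> Dw" and w: "w \<in> Dw"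
  shows "summable (\<lambda>n. complex_of_real (4^n) * (cf n u * cnj (cf n w)))"
proof (rule summable_comparison_test[OF exI[of _ 0] summable_add[OF sq[OF u] sq[OF w]]], intro allI impI)
  fix n :: nat
  have "norm (complex_of_real (4^n) * (cf n u * cnj (cf n w))) = 4^n * (cmod (cf n u) * cmod (cf n w))"
    by (simp add: norm_mult norm_power)
  also have "\<dots> \<le> 4^n * ((cmod (cf n u))^2 + (cmod (cf n w))^2)"
    by (intro mult_left_mono ab_le_sq) auto
  finally show "norm (complex_of_real (4^n) * (cf n u * cnj (cf n w))) \<le>
      4^n * (cmod (cf n u))^2 + 4^n * (cmod (cf n w))^2" by (simp add: algebra_simps)
qed

lemma sphi: assumes u: "u \<in> Dw" shows "summable (\<lambda>n. cf n u)"
proof (rule summable_comparison_test[OF exI[of _ 0] summable_add[OF sq[OF u] summable_geometric[of "1/4::real"]]],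
    intro allI impI)
  fix n :: nat
  show "norm (cf n u) \<le> 4^n * (cmod (cf n u))^2 + (1/4)^n" by (rule amgm4)
qed simp

lemma xv_add_left: assumes "u \<in> Dw" "u' \<in> Dw" "w \<in> Dw" shows "xv (u + u') w = xv u w + xv u' w"
proof -
  have "(\<lambda>n. complex_of_real (4^n) * (cf n (u + u') * cnj (cf n w))) =
    (\<lambda>n. complex_of_real (4^n) * (cf n u * cnj (cf n w)) + complex_of_real (4^n) * (cf n u' * cnj (cf n w)))"
    by (simp add: cf_add algebra_simps)
  then show ?thesis unfolding xv_def using suminf_add[OF sx sx] assms by simp
qed

lemma xv_add_right: assumes "u \<in> Dw" "u' \<in> Dw" "w \<in> Dw" shows "xv w (u + u') = xv w u + xv w u'"
proof -
  have "(\<lambda>n. complex_of_real (4^n) * (cf n w * cnj (cf n (u + u')))) =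
    (\<lambda>n. complex_of_real (4^n) * (cf n w * cnj (cf n u)) + complex_of_real (4^n) * (cf n w * cnj (cf n u')))"
    by (simp add: cf_add algebra_simps)
  then show ?thesis unfolding xv_def using suminf_add[OF sx sx] assms by simp
qed

lemma xv_hscale_left: assumes "u \<in> Dw" "w \<in> Dw" shows "xv (hscale a u) w = a * xv u w"
proof -
  have "(\<lambda>n. complex_of_real (4^n) * (cf n (hscale a u) * cnj (cf n w))) =
    (\<lambda>n. a * (complex_of_real (4^n) * (cf n u * cnj (cf n w))))"
    by (simp add: cf_hscale algebra_simps)
  then show ?thesis unfolding xv_def using suminf_mult[OF sx[OF assms], of a] by simp
qed

lemma xv_hscale_right: assumes "u \<in> Dw" "w \<in> Dw" shows "xv w (hscale a u) = cnj a * xv w u"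
proof -
  have "(\<lambda>n. complex_of_real (4^n) * (cf n w * cnj (cf n (hscale a u)))) =
    (\<lambda>n. cnj a * (complex_of_real (4^n) * (cf n w * cnj (cf n u))))"
    by (simp add: cf_hscale algebra_simps)
  then show ?thesis unfolding xv_def using suminf_mult[OF sx[OF assms(2,1)], of "cnj a"] by simp
qed

lemma xv_diag: assumes u: "u \<in> Dw" shows "xv u u = complex_of_real (xq u)"
proof -
  have eq: "(\<lambda>n. complex_of_real (4^n) * (cf n u * cnj (cf n u))) =
    (\<lambda>n. complex_of_real (4^n * (cmod (cf n u))^2))"
    by (rule ext) (simp only: of_real_mult complex_norm_square)
  show ?thesis unfolding xv_def xq_def eq by (rule suminf_of_real[OF sq[OF u], symmetric])
qed

lemma phi_add: "u \<in> Dw \<Longrightarrow> u' \<in> Dw \<Longrightarrow> phi (u + u') = phi u + phi u'"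
  unfolding phi_def by (simp add: cf_add suminf_add[OF sphi sphi])

lemma phi_hscale: "u \<in> Dw \<Longrightarrow> phi (hscale a u) = a * phi u"
  unfolding phi_def by (simp add: cf_hscale suminf_mult[OF sphi])

lemma Xf_simps: "dom_f Xf = Dw" "u \<in> Dw \<Longrightarrow> w \<in> Dw \<Longrightarrow> val_f Xf u w = xv u w"
  by (simp_all add: Xf_def)

lemma Yf_simps: "dom_f Yf = Dw" "u \<in> Dw \<Longrightarrow> w \<in> Dw \<Longrightarrow> val_f Yf u w = phi u * cnj (phi w)"
  by (simp_all add: Yf_def)

lemma Dw_add': "u \<in> Dw \<Longrightarrow> w \<in> Dw \<Longrightarrow> u + w \<in> Dw" by (rule Dw_add)

lemma xq_nonneg: "u \<in> Dw \<Longrightarrow> 0 \<le> xq u"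
  unfolding xq_def by (intro suminf_nonneg sq) auto

lemma positive_Xf: "positive_f Xf"
  unfolding positive_f_def is_form_def Xf_simps(1)
proof (intro conjI allI ballI impI Dw_sub Dw_dense)
  fix x y assume "\<not> (x \<in> Dw \<and> y \<in> Dw)" then show "val_f Xf x y = 0" by (auto simp: Xf_def)
next
  fix x x' y assume h: "x \<in> Dw" "x' \<in> Dw" "y \<in> Dw"
  show "val_f Xf (x + x') y = val_f Xf x y + val_f Xf x' y"
    using h Dw_add[OF h(1,2)] by (simp add: Xf_simps xv_add_left)
  show "val_f Xf y (x + x') = val_f Xf y x + val_f Xf y x'"
    using h Dw_add[OF h(1,2)] by (simp add: Xf_simps xv_add_right)
next
  fix a x y assume h: "x \<in> Dw" "y \<in> Dw"
  show "val_f Xf (hscale a x) y = a * val_f Xf x y"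
    using h Dw_hscale[OF h(1)] by (simp add: Xf_simps xv_hscale_left)
  show "val_f Xf y (hscale a x) = cnj a * val_f Xf y x"
    using h Dw_hscale[OF h(1)] by (simp add: Xf_simps xv_hscale_right)
next
  fix x assume h: "x \<in> Dw"
  show "Im (val_f Xf x x) = 0" "0 \<le> Re (val_f Xf x x)"
    using h by (simp_all add: Xf_simps xv_diag xq_nonneg)
qed

lemma positive_Yf: "positive_f Yf"
  unfolding positive_f_def is_form_def Yf_simps(1)
proof (intro conjI allI ballI impI Dw_sub Dw_dense)
  fix x y assume "\<not> (x \<in> Dw \<and> y \<in> Dw)" then show "val_f Yf x y = 0" by (auto simp: Yf_def)
next
  fix x x' y assume h: "x \<in> Dw" "x' \<in> Dw" "y \<in> Dw"
  show "val_f Yf (x + x') y = val_f Yf x y + val_f Yf x' y"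
    using h Dw_add[OF h(1,2)] by (simp add: Yf_simps phi_add algebra_simps)
  show "val_f Yf y (x + x') = val_f Yf y x + val_f Yf y x'"
    using h Dw_add[OF h(1,2)] by (simp add: Yf_simps phi_add algebra_simps)
next
  fix a x y assume h: "x \<in> Dw" "y \<in> Dw"
  show "val_f Yf (hscale a x) y = a * val_f Yf x y"
    using h Dw_hscale[OF h(1)] by (simp add: Yf_simps phi_hscale)
  show "val_f Yf y (hscale a x) = cnj a * val_f Yf y x"
    using h Dw_hscale[OF h(1)] by (simp add: Yf_simps phi_hscale)
next
  fix x assume h: "x \<in> Dw"
  have "phi x * cnj (phi x) = complex_of_real ((cmod (phi x))^2)" by (simp only: complex_norm_square)
  then show "Im (val_f Yf x x) = 0" "0 \<le> Re (val_f Yf x x)"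
    using h by (simp_all add: Yf_simps)
qed

lemma qf_Xf: "u \<in> Dw \<Longrightarrow> qf Xf u = xq u"
  by (simp add: qf_def Xf_simps xv_diag)

lemma qf_Yf: "u \<in> Dw \<Longrightarrow> qf Yf u = (cmod (phi u))^2"
proof -
  have "phi u * cnj (phi u) = complex_of_real ((cmod (phi u))^2)" by (simp only: complex_norm_square)
  then show "u \<in> Dw \<Longrightarrow> qf Yf u = (cmod (phi u))^2" by (simp add: qf_def Yf_simps)
qed

lemma norm_e: "norm (e n) = 1"
proof -
  have "(norm (e n))^2 = 1" using hinner_self_Re[of "e n"] orth[of n n] by simp
  then have "sqrt 1 = norm (e n)" by (intro real_sqrt_unique) auto
  then show ?thesis by simp
qed

lemma xq_e: "xq (e n) = 4^n"
  unfolding xq_def by (subst suminf_finite[of "{n}"]) (auto simp: cf_e)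

lemma phi_fc: "finite F \<Longrightarrow> phi (fc a F) = (\<Sum>k\<in>F. a k)"
  unfolding phi_def by (subst suminf_finite[of F]) (auto simp: cf_fc)

lemma phi_e: "phi (e n) = 1"
  unfolding phi_def by (subst suminf_finite[of "{n}"]) (auto simp: cf_e)

lemma unbounded_by_e:
  assumes "positive_f t" "dom_f t = Dw" and ge: "\<And>n. 4^n \<le> qf t (e n)"
  shows "\<not> bounded_f t"
proof
  assume "bounded_f t"
  then obtain B where B: "\<And>x. x \<in> dom_f t \<Longrightarrow> norm x = 1 \<Longrightarrow> qf t x \<le> B" using bounded_fD by blast
  obtain n where n: "B < 4^n" using real_arch_pow[of 4 B] by auto
  have "4^n \<le> B" using ge[of n] B[of "e n"] assms(2) e_in_Dw norm_e by force
  with n show False by simp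
qed

lemma Xf_unbounded: "\<not> bounded_f Xf"
  by (rule unbounded_by_e[OF positive_Xf Xf_simps(1)]) (simp add: qf_Xf e_in_Dw xq_e)

lemma Yf_unbounded: "\<not> bounded_f Yf"
proof
  assume "bounded_f Yf"
  then obtain B where B: "\<And>x. x \<in> Dw \<Longrightarrow> norm x = 1 \<Longrightarrow> qf Yf x \<le> B" using bounded_fD Yf_simps(1) by metis
  obtain N :: nat where N: "max B 0 < real N" using reals_Archimedean2 by blast
  have N0: "N > 0" using N by (cases N) auto
  define s where "s = fc (\<lambda>_. 1) {..<N}"
  have ns: "(norm s)^2 = real N" by (simp add: s_def norm_fc)
  have ps: "phi s = of_nat N" by (simp add: s_def phi_fc)
  have nsp: "norm s = sqrt (real N)" using ns by (metis norm_ge_zero real_sqrt_unique)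
  define z where "z = hscale (complex_of_real (1 / sqrt (real N))) s"
  have zD: "z \<in> Dw" by (simp add: z_def s_def Dw_hscale fc_in_Dw)
  have nz: "norm z = 1" using N0 by (simp add: z_def norm_hscale norm_divide nsp)
  have "qf Yf z = (cmod (phi z))^2" by (rule qf_Yf[OF zD])
  also have "\<dots> = real N"
  proof -
    have sD: "s \<in> Dw" by (simp add: s_def fc_in_Dw)
    have pz: "phi z = complex_of_real (1 / sqrt (real N)) * of_nat N"
      unfolding z_def using phi_hscale[OF sD] ps by simp
    have "cmod (phi z) = real N / sqrt (real N)" unfolding pz by (simp add: norm_mult norm_divide)
    then have "(cmod (phi z))^2 = (real N)^2 / real N" by (simp add: power_divide)
    also have "\<dots> = real N" using N0 by (simp add: power2_eq_square)
    finally show ?thesis .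
  qed
  finally have "real N \<le> B" using B[OF zD nz] by simp
  with N show False by simp
qed

end


lemma lscD_by_minorants:
  assumes h: "\<And>x d. x \<in> dom_f t \<Longrightarrow> d > 0 \<Longrightarrow>
     \<exists>G. continuous_on UNIV G \<and> (\<forall>z\<in>dom_f t. G z \<le> qf t z) \<and> qf t x - d/2 < G x"
  shows "lscD t"
  unfolding lscD_def
proof (intro ballI allI impI)
  fix x and d :: real assume x: "x \<in> dom_f t" and d: "d > 0"
  obtain G where G: "continuous_on UNIV G" "\<And>z. z \<in> dom_f t \<Longrightarrow> G z \<le> qf t z" "qf t x - d/2 < G x"
    using h[OF x d] by blast
  obtain e where e: "e > 0" "\<And>z. dist z x < e \<Longrightarrow> dist (G z) (G x) < d/2"
    using G(1) d unfolding continuous_on_iff by (metis UNIV_I half_gt_zero)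
  show "\<exists>e>0. \<forall>z\<in>dom_f t. dist z x < e \<longrightarrow> qf t x - d \<le> qf t z"
  proof (intro exI[of _ e] conjI ballI impI e(1))
    fix z assume z: "z \<in> dom_f t" "dist z x < e"
    have "dist (G z) (G x) < d/2" by (rule e(2)[OF z(2)])
    then have "G x - d/2 < G z" unfolding dist_real_def abs_less_iff by linarith
    then show "qf t x - d \<le> qf t z" using G(2)[OF z(1)] G(3) by linarith
  qed
qed

lemma cmod_diff_sq: "(cmod (p - l))^2 = (cmod p)^2 + (cmod l)^2 - 2 * Re (cnj l * p)"
  unfolding cmod_power2 by (simp add: power2_eq_square algebra_simps)

lemma cmod_sq_Re: "(cmod c)^2 = Re (cnj c * c)"
  unfolding cmod_power2 by (simp add: power2_eq_square algebra_simps)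

context ons
begin

lemma cont_cf: "continuous_on UNIV (\<lambda>z. cf n z)"
  unfolding cf_def by (rule continuous_hinner_left)

lemma lscD_Xf: "lscD Xf"
proof (rule lscD_by_minorants)
  fix u and d :: real assume u: "u \<in> dom_f Xf" and d: "d > 0"
  then have uD: "u \<in> Dw" by (simp add: Xf_simps)
  have "(\<lambda>N. \<Sum>n<N. 4^n * (cmod (cf n u))^2) \<longlonglongrightarrow> xq u"
    unfolding xq_def by (rule summable_LIMSEQ[OF sq[OF uD]])
  then have "eventually (\<lambda>N. xq u - d/2 < (\<Sum>n<N. 4^n * (cmod (cf n u))^2)) sequentially"
    using d by (intro order_tendstoD(1)) auto
  then obtain N where N: "xq u - d/2 < (\<Sum>n<N. 4^n * (cmod (cf n u))^2)"
    by (auto simp: eventually_sequentially)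
  show "\<exists>G. continuous_on UNIV G \<and> (\<forall>z\<in>dom_f Xf. G z \<le> qf Xf z) \<and> qf Xf u - d/2 < G u"
  proof (intro exI[of _ "\<lambda>z. \<Sum>n<N. 4^n * (cmod (cf n z))^2"] conjI ballI)
    show "continuous_on UNIV (\<lambda>z. \<Sum>n<N. 4^n * (cmod (cf n z))^2)"
      by (intro continuous_intros cont_cf)
    fix z assume "z \<in> dom_f Xf"
    then have zD: "z \<in> Dw" by (simp add: Xf_simps)
    show "(\<Sum>n<N. 4^n * (cmod (cf n z))^2) \<le> qf Xf z"
      unfolding qf_Xf[OF zD] xq_def by (rule sum_le_suminf[OF sq[OF zD]]) auto
  next
    show "qf Xf u - d/2 < (\<Sum>n<N. 4^n * (cmod (cf n u))^2)" using N qf_Xf[OF uD] by simp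
  qed
qed

definition Wf :: "'h form" where "Wf = add_f Xf Yf"

lemma Wf_dom: "dom_f Wf = Dw" by (simp add: Wf_def add_f_simps Xf_simps Yf_simps)

lemma qf_Wf: "z \<in> Dw \<Longrightarrow> qf Wf z = xq z + (cmod (phi z))^2"
  by (simp add: Wf_def qf_add_f Xf_simps Yf_simps qf_Xf qf_Yf)

lemma positive_Wf: "positive_f Wf"
  unfolding Wf_def by (rule positive_add_f[OF positive_Xf positive_Yf]) (simp add: Xf_simps Yf_simps Dw_dense)

lemma lscD_Wf: "lscD Wf"
proof (rule lscD_by_minorants)
  fix u and d :: real assume u: "u \<in> dom_f Wf" and d: "d > 0"
  then have uD: "u \<in> Dw" by (simp add: Wf_dom)
  define l where "l = phi u"
  define a where "a n z = 4^n * (cmod (cf n z))^2 + 2 * Re (cnj l * cf n z)" for n z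
  define b where "b n = (cmod l)^2 * (1/4::real)^n" for n
  have sb: "summable b" unfolding b_def by (intro summable_mult summable_geometric) simp
  define Sb where "Sb = suminf b"
  have ab_nonneg: "0 \<le> a n z + b n" for n z
    unfolding a_def b_def using key_nonneg[of n "cf n z" l] by (simp add: algebra_simps)
  have sre: "summable (\<lambda>n. 2 * Re (cnj l * cf n z))" if "z \<in> Dw" for z
    by (intro summable_mult summable_Re sphi[OF that])
  have sre_val: "(\<Sum>n. 2 * Re (cnj l * cf n z)) = 2 * Re (cnj l * phi z)" if "z \<in> Dw" for z
  proof -
    have "(\<Sum>n. 2 * Re (cnj l * cf n z)) = 2 * (\<Sum>n. Re (cnj l * cf n z))"
      by (rule suminf_mult[OF summable_Re[OF summable_mult[OF sphi[OF that]]]])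
    also have "(\<Sum>n. Re (cnj l * cf n z)) = Re (\<Sum>n. cnj l * cf n z)"
      by (rule Re_suminf[symmetric, OF summable_mult[OF sphi[OF that]]])
    also have "(\<Sum>n. cnj l * cf n z) = cnj l * phi z"
      unfolding phi_def by (rule suminf_mult[OF sphi[OF that]])
    finally show ?thesis .
  qed
  have sab: "summable (\<lambda>n. a n z + b n)" if "z \<in> Dw" for z
    unfolding a_def by (intro summable_add sq that sre sb)
  have sab_val: "(\<Sum>n. a n z + b n) = xq z + 2 * Re (cnj l * phi z) + Sb" if "z \<in> Dw" for z
  proof -
    have "(\<Sum>n. a n z + b n) = (\<Sum>n. a n z) + Sb"
      unfolding Sb_def by (rule suminf_add[symmetric]) (use summable_add[OF sq[OF that] sre[OF that]] sb in \<open>auto simp: a_def\<close>)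
    also have "(\<Sum>n. a n z) = xq z + 2 * Re (cnj l * phi z)"
      unfolding a_def xq_def using suminf_add[OF sq[OF that] sre[OF that]] sre_val[OF that] by simp
    finally show ?thesis .
  qed
  define G where "G N z = (\<Sum>n<N. a n z + b n) - Sb - (cmod l)^2" for N z
  have minor: "G N z \<le> qf Wf z" if "z \<in> Dw" for N z
  proof -
    have "(\<Sum>n<N. a n z + b n) \<le> (\<Sum>n. a n z + b n)"
      by (rule sum_le_suminf[OF sab[OF that]]) (auto intro: ab_nonneg)
    then have "G N z \<le> xq z + 2 * Re (cnj l * phi z) - (cmod l)^2"
      unfolding G_def sab_val[OF that] by simp
    also have "\<dots> \<le> xq z + (cmod (phi z))^2"
      using cmod_diff_sq[of "phi z" l] zero_le_power2[of "cmod (phi z - l)"] by linarith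
    finally show ?thesis using qf_Wf[OF that] by simp
  qed
  have "(\<lambda>N. G N u) \<longlonglongrightarrow> (\<Sum>n. a n u + b n) - Sb - (cmod l)^2"
    unfolding G_def by (intro tendsto_intros summable_LIMSEQ[OF sab[OF uD]])
  moreover have "(\<Sum>n. a n u + b n) - Sb - (cmod l)^2 = qf Wf u"
    using sab_val[OF uD] qf_Wf[OF uD] cmod_sq_Re[of l] by (simp add: l_def)
  ultimately have "(\<lambda>N. G N u) \<longlonglongrightarrow> qf Wf u" by simp
  then have "eventually (\<lambda>N. qf Wf u - d/2 < G N u) sequentially"
    using d by (intro order_tendstoD(1)) auto
  then obtain N where N: "qf Wf u - d/2 < G N u" by (auto simp: eventually_sequentially)
  show "\<exists>G. continuous_on UNIV G \<and> (\<forall>z\<in>dom_f Wf. G z \<le> qf Wf z) \<and> qf Wf u - d/2 < G u"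
  proof (intro exI[of _ "G N"] conjI ballI)
    show "continuous_on UNIV (G N)"
      unfolding G_def a_def by (intro continuous_intros cont_cf)
    show "G N z \<le> qf Wf z" if "z \<in> dom_f Wf" for z using minor that Wf_dom by simp
  qed (rule N)
qed

lemma not_lscD_Yf: "\<not> lscD Yf"
proof
  assume L: "lscD Yf"
  have e0: "e 0 \<in> Dw" by (rule e_in_Dw)
  have q0: "qf Yf (e 0) = 1" using qf_Yf[OF e0] phi_e by simp
  obtain r where r: "r > 0" "\<And>z. z \<in> Dw \<Longrightarrow> dist z (e 0) < r \<Longrightarrow> qf Yf (e 0) - 1/2 \<le> qf Yf z"
    using L e0 unfolding lscD_def Yf_simps(1) by (metis half_gt_zero zero_less_one)
  obtain M :: nat where M: "1 / r^2 < real M" using reals_Archimedean2 by blast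
  have M0: "M > 0" using M r by (cases M) (auto intro: order.strict_trans2[of _ 0])
  define s where "s = fc (\<lambda>_. 1) {..<M}"
  have sD: "s \<in> Dw" by (simp add: s_def fc_in_Dw)
  have ns: "(norm s)^2 = real M" by (simp add: s_def norm_fc)
  have ps: "phi s = of_nat M" by (simp add: s_def phi_fc)
  define g where "g = hscale (complex_of_real (1 / real M)) s"
  have gD: "g \<in> Dw" by (simp add: g_def Dw_hscale sD)
  have pg: "phi g = 1" using phi_hscale[OF sD] ps M0 by (simp add: g_def)
  have "(norm g)^2 = (1 / real M)^2 * (norm s)^2"
    by (simp add: g_def norm_hscale power_mult_distrib norm_divide power_divide)
  then have ng2: "(norm g)^2 = 1 / real M" using ns M0 by (simp add: power2_eq_square)
  define z where "z = e 0 - g"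
  have zD: "z \<in> Dw" using Dw_add[OF e0 Dw_hscale[OF gD, of "-1"]] by (simp add: z_def hscale_minus_one)
  have pz: "phi z = 0"
    using phi_add[OF e0 Dw_hscale[OF gD, of "-1"]] phi_hscale[OF gD, of "-1"] phi_e pg
    by (simp add: z_def hscale_minus_one)
  have "dist z (e 0) = norm g" by (simp add: z_def dist_norm)
  moreover have "norm g < r"
  proof -
    have "1 / real M < r^2" using M r M0 by (simp add: field_simps)
    then have "(norm g)^2 < r^2" using ng2 by simp
    then show ?thesis using r by (simp add: power_less_imp_less_base)
  qed
  ultimately have "qf Yf (e 0) - 1/2 \<le> qf Yf z" using r(2)[OF zD] by simp
  then show False using q0 qf_Yf[OF zD] pz by simp
qed

end

theorem not_sub_gea:
  assumes inf: "infinite_dimensional TYPE('h::chilbert)"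
  shows "\<not> sub_gea (Vf :: 'h form set) oplus_Vf zero_f Rf"
proof
  assume S: "sub_gea (Vf :: 'h form set) oplus_Vf zero_f Rf"
  interpret O: ons "eseq :: nat \<Rightarrow> 'h" by (unfold_locales) (rule eseq_orth[OF inf])
  have v: "(eseq 0 :: 'h) \<noteq> 0" using O.norm_e[of 0] by auto
  have XV: "O.Xf \<in> Vf" using O.positive_Xf O.Xf_unbounded by (simp add: Vf_def)
  have YV: "O.Yf \<in> Vf" using O.positive_Yf O.Yf_unbounded by (simp add: Vf_def)
  have Wunb: "\<not> bounded_f O.Wf"
  proof (rule O.unbounded_by_e[OF O.positive_Wf O.Wf_dom])
    fix n show "4^n \<le> qf O.Wf (eseq n)"
      using O.qf_Wf[OF O.e_in_Dw] O.xq_e by simp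
  qed
  have WV: "O.Wf \<in> Vf" using O.positive_Wf Wunb by (simp add: Vf_def)
  have op: "oplus_Vf O.Xf O.Yf = Some O.Wf" by (simp add: oplus_Vf_def O.Wf_def O.Xf_simps O.Yf_simps)
  have XR: "O.Xf \<in> Rf" using Rf_iff[OF v] XV O.lscD_Xf by simp
  have WR: "O.Wf \<in> Rf" using Rf_iff[OF v] WV O.lscD_Wf by simp
  have YR: "O.Yf \<notin> Rf" using Rf_iff[OF v] O.not_lscD_Yf by simp
  show False using S XV YV WV op XR WR YR unfolding sub_gea_def by blast
qed

theorem theorem4p13:
  assumes "infinite_dimensional TYPE('h::chilbert)"
  shows "gen_effect_algebra (Rf :: 'h form set) (restrict_op Rf oplus_Vf) zero_f
         \<and> \<not> sub_gea (Vf :: 'h form set) oplus_Vf zero_f Rf"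
proof
  obtain v :: 'h where v: "v \<noteq> 0" using nontrivial_of_infdim[OF assms] by blast
  show "gen_effect_algebra (Rf :: 'h form set) (restrict_op Rf oplus_Vf) zero_f" by (rule gea_Rf[OF v])
  show "\<not> sub_gea (Vf :: 'h form set) oplus_Vf zero_f Rf" by (rule not_sub_gea[OF assms])
qed


end
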